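(* Let $\mathcal X$ be a Scott set, $T\in\mathcal X$ a complete consistent extension of $\mathrm{PA}$, $M\models T$ a model coded in $\mathcal X$, and $U$ a non-principal ultrafilter on the Boolean algebra $\mathcal X$. Then $K=\prod_{\mathcal X}M/U$ is an elementary extension of $M$ (via $c\mapsto[\bar c]$, $\bar c$ the constant function) and $K$ is recursively saturated.
   Context: A Scott set is a nonempty $\mathcal X\subseteq\mathcal P(\omega)$ closed under finite unions, complements and Turing reducibility, such that every theory in $\mathcal X$ has a complete consistent extension in $\mathcal X$. $M$ is coded in $\mathcal X$ if (up to isomorphism) its domain is a subset of $\omega$ belonging to $\mathcal X$ and its elementary diagram $\mathrm{Th}(M,a)_{a\in M}$ (as a set of Gödel numbers) belongs to $\mathcal X$. $\prod_{\mathcal X}M$ is the set of functions $f:\omega\to M$ whose graphs (coded via pairing) belong to $\mathcal X$. For an ultrafilter $U$ on $\mathcal X$, $f\equiv_U g$ iff $\{n:f(n)=g(n)\}\in U$, and $\prod_{\mathcal X}M/U$ is the set of $\equiv_U$-classes with $+,\cdot,<,0,1$ interpreted pointwise (mod $U$). Recursively saturated: every type over the model with finitely many parameters whose set of formulas is recursive is realized. *)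

theory Defs
  imports Main "HOL-Library.Nat_Bijection"
begin

section \<open>Oracle computability (mu-recursive functions with an oracle)\<close>

datatype recf = RZero | RSuc | RProj nat | ROracle | RComp recf "recf list"
  | RPrec recf recf | RMin recf

inductive reval :: "nat set \<Rightarrow> recf \<Rightarrow> nat list \<Rightarrow> nat \<Rightarrow> bool" for A where
  "reval A RZero xs 0"
| "reval A RSuc (x # xs) (Suc x)"
| "i < length xs \<Longrightarrow> reval A (RProj i) xs (xs ! i)"
| "reval A ROracle (x # xs) (if x \<in> A then 1 else 0)"
| "list_all2 (\<lambda>g y. reval A g xs y) gs ys \<Longrightarrow> reval A f ys r \<Longrightarrow> reval A (RComp f gs) xs r"
| "reval A f xs r \<Longrightarrow> reval A (RPrec f g) (0 # xs) r"
| "reval A (RPrec f g) (n # xs) s \<Longrightarrow> reval A g (s # n # xs) r \<Longrightarrow> reval A (RPrec f g) (Suc n # xs) r"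
| "reval A f (n # xs) 0 \<Longrightarrow> (\<forall>m<n. \<exists>k. reval A f (m # xs) (Suc k)) \<Longrightarrow> reval A (RMin f) xs n"

definition turing_le :: "nat set \<Rightarrow> nat set \<Rightarrow> bool" where
  "turing_le B A \<longleftrightarrow> (\<exists>f. \<forall>n. reval A f [n] (if n \<in> B then 1 else 0))"

definition recursive_set :: "nat set \<Rightarrow> bool" where
  "recursive_set B \<longleftrightarrow> turing_le B {}"

section \<open>First-order language of arithmetic (0,1,+,*,<) with constants c_n, n in omega\<close>

datatype trm = TVar nat | TCst nat | TZero | TOne | TPlus trm trm | TTimes trm trm

datatype fm = FEq trm trm | FLt trm trm | FNeg fm | FImp fm fm | FAll nat fm

definition FConj :: "fm \<Rightarrow> fm \<Rightarrow> fm" where "FConj p q = FNeg (FImp p (FNeg q))"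
definition FIff :: "fm \<Rightarrow> fm \<Rightarrow> fm" where "FIff p q = FConj (FImp p q) (FImp q p)"
definition FEx :: "nat \<Rightarrow> fm \<Rightarrow> fm" where "FEx x p = FNeg (FAll x (FNeg p))"

fun fvt :: "trm \<Rightarrow> nat set" where
  "fvt (TVar n) = {n}" | "fvt (TCst n) = {}" | "fvt TZero = {}" | "fvt TOne = {}"
| "fvt (TPlus a b) = fvt a \<union> fvt b" | "fvt (TTimes a b) = fvt a \<union> fvt b"

fun fv :: "fm \<Rightarrow> nat set" where
  "fv (FEq a b) = fvt a \<union> fvt b" | "fv (FLt a b) = fvt a \<union> fvt b"
| "fv (FNeg p) = fv p" | "fv (FImp p q) = fv p \<union> fv q" | "fv (FAll x p) = fv p - {x}"

fun cst_t :: "trm \<Rightarrow> nat set" where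
  "cst_t (TVar n) = {}" | "cst_t (TCst n) = {n}" | "cst_t TZero = {}" | "cst_t TOne = {}"
| "cst_t (TPlus a b) = cst_t a \<union> cst_t b" | "cst_t (TTimes a b) = cst_t a \<union> cst_t b"

fun csts :: "fm \<Rightarrow> nat set" where
  "csts (FEq a b) = cst_t a \<union> cst_t b" | "csts (FLt a b) = cst_t a \<union> cst_t b"
| "csts (FNeg p) = csts p" | "csts (FImp p q) = csts p \<union> csts q" | "csts (FAll x p) = csts p"

definition sentence :: "fm \<Rightarrow> bool" where "sentence p \<longleftrightarrow> fv p = {}"

definition langA :: "fm \<Rightarrow> bool" where "langA p \<longleftrightarrow> csts p = {}"

fun substt :: "nat \<Rightarrow> trm \<Rightarrow> trm \<Rightarrow> trm" where
  "substt x t (TVar n) = (if n = x then t else TVar n)" | "substt x t (TCst n) = TCst n"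
| "substt x t TZero = TZero" | "substt x t TOne = TOne"
| "substt x t (TPlus a b) = TPlus (substt x t a) (substt x t b)"
| "substt x t (TTimes a b) = TTimes (substt x t a) (substt x t b)"

fun subst :: "nat \<Rightarrow> trm \<Rightarrow> fm \<Rightarrow> fm" where
  "subst x t (FEq a b) = FEq (substt x t a) (substt x t b)"
| "subst x t (FLt a b) = FLt (substt x t a) (substt x t b)"
| "subst x t (FNeg p) = FNeg (subst x t p)"
| "subst x t (FImp p q) = FImp (subst x t p) (subst x t q)"
| "subst x t (FAll y p) = (if y = x then FAll y p else FAll y (subst x t p))"

fun substable :: "nat \<Rightarrow> trm \<Rightarrow> fm \<Rightarrow> bool" where
  "substable x t (FEq a b) = True" | "substable x t (FLt a b) = True"
| "substable x t (FNeg p) = substable x t p"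
| "substable x t (FImp p q) = (substable x t p \<and> substable x t q)"
| "substable x t (FAll y p) = (x \<notin> fv (FAll y p) \<or> (y \<notin> fvt t \<and> substable x t p))"

definition close :: "fm \<Rightarrow> fm" where
  "close p = foldr FAll (sorted_list_of_set (fv p)) p"

fun code_t :: "trm \<Rightarrow> nat" where
  "code_t (TVar n) = prod_encode (0, n)" | "code_t (TCst n) = prod_encode (1, n)"
| "code_t TZero = prod_encode (2, 0)" | "code_t TOne = prod_encode (3, 0)"
| "code_t (TPlus a b) = prod_encode (4, prod_encode (code_t a, code_t b))"
| "code_t (TTimes a b) = prod_encode (5, prod_encode (code_t a, code_t b))"

fun code :: "fm \<Rightarrow> nat" where
  "code (FEq a b) = prod_encode (0, prod_encode (code_t a, code_t b))"
| "code (FLt a b) = prod_encode (1, prod_encode (code_t a, code_t b))"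
| "code (FNeg p) = prod_encode (2, code p)"
| "code (FImp p q) = prod_encode (3, prod_encode (code p, code q))"
| "code (FAll x p) = prod_encode (4, prod_encode (x, code p))"

section \<open>Deduction (Hilbert calculus for first-order logic with equality)\<close>

inductive lax :: "fm \<Rightarrow> bool" where
  "lax (FImp p (FImp q p))"
| "lax (FImp (FImp p (FImp q r)) (FImp (FImp p q) (FImp p r)))"
| "lax (FImp (FImp (FNeg p) (FNeg q)) (FImp q p))"
| "substable x t p \<Longrightarrow> lax (FImp (FAll x p) (subst x t p))"
| "lax (FImp (FAll x (FImp p q)) (FImp (FAll x p) (FAll x q)))"
| "x \<notin> fv p \<Longrightarrow> lax (FImp p (FAll x p))"
| "lax (FEq (TVar x) (TVar x))"
| "lax (FImp (FEq (TVar x1) (TVar y1)) (FImp (FEq (TVar x2) (TVar y2))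
      (FEq (TPlus (TVar x1) (TVar x2)) (TPlus (TVar y1) (TVar y2)))))"
| "lax (FImp (FEq (TVar x1) (TVar y1)) (FImp (FEq (TVar x2) (TVar y2))
      (FEq (TTimes (TVar x1) (TVar x2)) (TTimes (TVar y1) (TVar y2)))))"
| "lax (FImp (FEq (TVar x1) (TVar y1)) (FImp (FEq (TVar x2) (TVar y2))
      (FImp (FEq (TVar x1) (TVar x2)) (FEq (TVar y1) (TVar y2)))))"
| "lax (FImp (FEq (TVar x1) (TVar y1)) (FImp (FEq (TVar x2) (TVar y2))
      (FImp (FLt (TVar x1) (TVar x2)) (FLt (TVar y1) (TVar y2)))))"

inductive prv :: "fm set \<Rightarrow> fm \<Rightarrow> bool" for G where
  hyp: "p \<in> G \<Longrightarrow> prv G p"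
| ax: "lax p \<Longrightarrow> prv G p"
| mp: "prv G (FImp p q) \<Longrightarrow> prv G p \<Longrightarrow> prv G q"
| gen: "prv G p \<Longrightarrow> (\<forall>q\<in>G. x \<notin> fv q) \<Longrightarrow> prv G (FAll x p)"

definition consistent :: "fm set \<Rightarrow> bool" where
  "consistent G \<longleftrightarrow> \<not> (\<exists>p. prv G p \<and> prv G (FNeg p))"

text \<open>Theories are represented as sets of Goedel numbers.\<close>
definition decode_set :: "nat set \<Rightarrow> fm set" where
  "decode_set A = {p. code p \<in> A}"

definition is_theory :: "nat set \<Rightarrow> bool" where
  "is_theory A \<longleftrightarrow> A \<subseteq> code ` {p. sentence p} \<and> consistent (decode_set A)"

definition complete_thy :: "nat set \<Rightarrow> bool" where
  "complete_thy S \<longleftrightarrow> (\<forall>p. sentence p \<longrightarrow> code p \<in> S \<or> code (FNeg p) \<in> S)"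

definition SucT :: "trm \<Rightarrow> trm" where "SucT t = TPlus t TOne"

inductive PA_ax :: "fm \<Rightarrow> bool" where
  "PA_ax (close (FNeg (FEq (SucT (TVar 0)) TZero)))"
| "PA_ax (close (FImp (FEq (SucT (TVar 0)) (SucT (TVar 1))) (FEq (TVar 0) (TVar 1))))"
| "PA_ax (close (FEq (TPlus (TVar 0) TZero) (TVar 0)))"
| "PA_ax (close (FEq (TPlus (TVar 0) (SucT (TVar 1))) (SucT (TPlus (TVar 0) (TVar 1)))))"
| "PA_ax (close (FEq (TTimes (TVar 0) TZero) TZero))"
| "PA_ax (close (FEq (TTimes (TVar 0) (SucT (TVar 1))) (TPlus (TTimes (TVar 0) (TVar 1)) (TVar 0))))"
| "PA_ax (close (FIff (FLt (TVar 0) (TVar 1)) (FEx 2 (FEq (TPlus (TVar 0) (SucT (TVar 2))) (TVar 1)))))"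
| "langA p \<Longrightarrow> PA_ax (close (FImp (FConj (subst x TZero p)
       (FAll x (FImp p (subst x (SucT (TVar x)) p)))) (FAll x p)))"

definition compl_cons_ext_PA :: "nat set \<Rightarrow> bool" where
  "compl_cons_ext_PA T \<longleftrightarrow>
     T \<subseteq> code ` {p. sentence p \<and> langA p} \<and> consistent (decode_set T) \<and>
     code ` {p. PA_ax p} \<subseteq> T \<and>
     (\<forall>p. sentence p \<and> langA p \<longrightarrow> code p \<in> T \<or> code (FNeg p) \<in> T)"

definition scott_set :: "nat set set \<Rightarrow> bool" where
  "scott_set X \<longleftrightarrow> X \<noteq> {} \<and>
     (\<forall>A\<in>X. \<forall>B\<in>X. A \<union> B \<in> X) \<and>
     (\<forall>A\<in>X. - A \<in> X) \<and>
     (\<forall>A\<in>X. \<forall>B. turing_le B A \<longrightarrow> B \<in> X) \<and>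
     (\<forall>A\<in>X. is_theory A \<longrightarrow> (\<exists>S\<in>X. A \<subseteq> S \<and> is_theory S \<and> complete_thy S))"

section \<open>Structures and satisfaction\<close>

record 'a struc =
  dm :: "'a set"
  zr :: 'a
  on :: 'a
  ad :: "'a \<Rightarrow> 'a \<Rightarrow> 'a"
  ml :: "'a \<Rightarrow> 'a \<Rightarrow> 'a"
  lt :: "'a \<Rightarrow> 'a \<Rightarrow> bool"

definition is_struc :: "('a, 'b) struc_scheme \<Rightarrow> bool" where
  "is_struc S \<longleftrightarrow> zr S \<in> dm S \<and> on S \<in> dm S \<and>
     (\<forall>a\<in>dm S. \<forall>b\<in>dm S. ad S a b \<in> dm S \<and> ml S a b \<in> dm S)"

text \<open>c interprets the constants, e the variables.\<close>
fun tval :: "('a, 'b) struc_scheme \<Rightarrow> (nat \<Rightarrow> 'a) \<Rightarrow> (nat \<Rightarrow> 'a) \<Rightarrow> trm \<Rightarrow> 'a" where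
  "tval S c e (TVar n) = e n" | "tval S c e (TCst n) = c n"
| "tval S c e TZero = zr S" | "tval S c e TOne = on S"
| "tval S c e (TPlus a b) = ad S (tval S c e a) (tval S c e b)"
| "tval S c e (TTimes a b) = ml S (tval S c e a) (tval S c e b)"

fun sat :: "('a, 'b) struc_scheme \<Rightarrow> (nat \<Rightarrow> 'a) \<Rightarrow> (nat \<Rightarrow> 'a) \<Rightarrow> fm \<Rightarrow> bool" where
  "sat S c e (FEq a b) = (tval S c e a = tval S c e b)"
| "sat S c e (FLt a b) = lt S (tval S c e a) (tval S c e b)"
| "sat S c e (FNeg p) = (\<not> sat S c e p)"
| "sat S c e (FImp p q) = (sat S c e p \<longrightarrow> sat S c e q)"
| "sat S c e (FAll x p) = (\<forall>a\<in>dm S. sat S c (e(x := a)) p)"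

definition models :: "nat struc \<Rightarrow> nat set \<Rightarrow> bool" where
  "models M T \<longleftrightarrow> (\<forall>p. code p \<in> T \<longrightarrow> sat M id (\<lambda>_. zr M) p)"

text \<open>Elementary diagram Th(M,a)_{a in M}: constant c_a names a.\<close>
definition ediag :: "nat struc \<Rightarrow> nat set" where
  "ediag M = {code p | p. sentence p \<and> csts p \<subseteq> dm M \<and> sat M id (\<lambda>_. zr M) p}"

definition coded_in :: "nat struc \<Rightarrow> nat set set \<Rightarrow> bool" where
  "coded_in M X \<longleftrightarrow> dm M \<in> X \<and> ediag M \<in> X"

section \<open>Ultrafilters on X and the X-ultrapower\<close>

definition ultrafilter_on :: "nat set set \<Rightarrow> nat set set \<Rightarrow> bool" where
  "ultrafilter_on X U \<longleftrightarrow> U \<subseteq> X \<and> UNIV \<in> U \<and> {} \<notin> U \<and>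
     (\<forall>A\<in>U. \<forall>B\<in>U. A \<inter> B \<in> U) \<and>
     (\<forall>A\<in>U. \<forall>B\<in>X. A \<subseteq> B \<longrightarrow> B \<in> U) \<and>
     (\<forall>A\<in>X. A \<in> U \<or> - A \<in> U)"

definition nonprincipal :: "nat set set \<Rightarrow> bool" where
  "nonprincipal U \<longleftrightarrow> (\<forall>n. {n} \<notin> U)"

definition graph_code :: "(nat \<Rightarrow> nat) \<Rightarrow> nat set" where
  "graph_code f = {prod_encode (n, f n) | n. True}"

definition prodX :: "nat set set \<Rightarrow> nat struc \<Rightarrow> (nat \<Rightarrow> nat) set" where
  "prodX X M = {f. (\<forall>n. f n \<in> dm M) \<and> graph_code f \<in> X}"

definition ucls :: "nat set set \<Rightarrow> nat struc \<Rightarrow> nat set set \<Rightarrow> (nat \<Rightarrow> nat) \<Rightarrow> (nat \<Rightarrow> nat) set" where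
  "ucls X M U f = {g \<in> prodX X M. {n. f n = g n} \<in> U}"

definition urep :: "(nat \<Rightarrow> nat) set \<Rightarrow> (nat \<Rightarrow> nat)" where
  "urep a = (SOME f. f \<in> a)"

definition ultrapower :: "nat set set \<Rightarrow> nat struc \<Rightarrow> nat set set \<Rightarrow> (nat \<Rightarrow> nat) set struc" where
  "ultrapower X M U =
    \<lparr> dm = ucls X M U ` prodX X M,
      zr = ucls X M U (\<lambda>_. zr M),
      on = ucls X M U (\<lambda>_. on M),
      ad = (\<lambda>a b. ucls X M U (\<lambda>n. ad M (urep a n) (urep b n))),
      ml = (\<lambda>a b. ucls X M U (\<lambda>n. ml M (urep a n) (urep b n))),
      lt = (\<lambda>a b. {n. lt M (urep a n) (urep b n)} \<in> U) \<rparr>"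

definition elem_emb :: "('a, 'c) struc_scheme \<Rightarrow> ('b, 'd) struc_scheme \<Rightarrow> ('a \<Rightarrow> 'b) \<Rightarrow> bool" where
  "elem_emb M K h \<longleftrightarrow> h ` dm M \<subseteq> dm K \<and>
     (\<forall>p e. langA p \<longrightarrow> (\<forall>i. e i \<in> dm M) \<longrightarrow>
        (sat M (\<lambda>_. zr M) e p \<longleftrightarrow> sat K (\<lambda>_. zr K) (h \<circ> e) p))"

text \<open>Every recursive type p(x, y1..yk) in the language L_A over finitely many
  parameters (the values of the free variables other than x under e) which is
  finitely satisfiable in K is realized in K.\<close>
definition rec_saturated :: "('a, 'b) struc_scheme \<Rightarrow> bool" where
  "rec_saturated K \<longleftrightarrow>
    (\<forall>p x e. p \<subseteq> {q. langA q} \<longrightarrow> recursive_set (code ` p) \<longrightarrow>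
       finite (\<Union> (fv ` p)) \<longrightarrow> (\<forall>i. e i \<in> dm K) \<longrightarrow>
       (\<forall>p0 \<subseteq> p. finite p0 \<longrightarrow> (\<exists>a\<in>dm K. \<forall>q\<in>p0. sat K (\<lambda>_. zr K) (e(x := a)) q)) \<longrightarrow>
       (\<exists>a\<in>dm K. \<forall>q\<in>p. sat K (\<lambda>_. zr K) (e(x := a)) q))"

end

theory Submission
  imports Defs
begin


definition rc :: "nat set \<Rightarrow> nat \<Rightarrow> (nat list \<Rightarrow> nat) \<Rightarrow> bool" where
  "rc A k F \<longleftrightarrow> (\<exists>g. \<forall>xs. length xs = k \<longrightarrow> reval A g xs (F xs))"

lemma rc_cong: "rc A k F \<Longrightarrow> (\<And>xs. length xs = k \<Longrightarrow> F xs = F' xs) \<Longrightarrow> rc A k F'"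
  unfolding rc_def by metis

lemma rc_cong2: "rc A k F \<Longrightarrow> k = k' \<Longrightarrow> (\<And>xs. length xs = k \<Longrightarrow> F xs = F' xs) \<Longrightarrow> rc A k' F'"
  using rc_cong by blast

lemma rc_zero: "rc A k (\<lambda>_. 0)"
  unfolding rc_def by (auto intro: reval.intros)

lemma rc_const: "rc A k (\<lambda>_. c)"
proof (induction c)
  case 0 then show ?case by (rule rc_zero)
next
  case (Suc c)
  then obtain g where g: "\<And>xs. length xs = k \<Longrightarrow> reval A g xs c" unfolding rc_def by blast
  have "reval A (RComp RSuc [g]) xs (Suc c)" if "length xs = k" for xs
    using g[OF that] by (auto intro!: reval.intros(5)[where ys="[c]"] reval.intros(2)[where xs="[]", simplified])
  then show ?case unfolding rc_def by blast
qed

lemma rc_proj: "i < k \<Longrightarrow> rc A k (\<lambda>xs. xs ! i)"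
  unfolding rc_def by (auto intro!: exI[of _ "RProj i"] reval.intros(3))

lemma rc_suc: "rc A 1 (\<lambda>xs. Suc (hd xs))"
  unfolding rc_def
  by (rule exI[of _ RSuc]) (auto simp: length_Suc_conv intro: reval.intros(2)[where xs="[]", simplified])

lemma rc_oracle: "rc A 1 (\<lambda>xs. if hd xs \<in> A then 1 else 0)"
  unfolding rc_def
proof (rule exI[of _ ROracle], intro allI impI)
  fix xs :: "nat list" assume "length xs = 1"
  then obtain y where "xs = [y]" by (auto simp: length_Suc_conv)
  then show "reval A ROracle xs (if hd xs \<in> A then 1 else 0)"
    using reval.intros(4)[of A y "[]"] by simp
qed

lemma rc_progs:
  assumes "\<forall>G\<in>set Gs. rc A k G"
  shows "\<exists>gs. \<forall>xs. length xs = k \<longrightarrow> list_all2 (\<lambda>g y. reval A g xs y) gs (map (\<lambda>G. G xs) Gs)"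
  using assms
proof (induction Gs)
  case Nil then show ?case by auto
next
  case (Cons G Gs)
  then obtain gs where gs: "\<forall>xs. length xs = k \<longrightarrow> list_all2 (\<lambda>g y. reval A g xs y) gs (map (\<lambda>G. G xs) Gs)" by auto
  from Cons.prems obtain g where "\<forall>xs. length xs = k \<longrightarrow> reval A g xs (G xs)" unfolding rc_def by auto
  then show ?case using gs by (intro exI[of _ "g # gs"]) auto
qed

lemma rc_comp:
  assumes "rc A (length Gs) F" "\<forall>G\<in>set Gs. rc A k G"
  shows "rc A k (\<lambda>xs. F (map (\<lambda>G. G xs) Gs))"
proof -
  obtain gs where gs: "\<forall>xs. length xs = k \<longrightarrow> list_all2 (\<lambda>g y. reval A g xs y) gs (map (\<lambda>G. G xs) Gs)"
    using rc_progs[OF assms(2)] by blast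
  obtain f where f: "\<forall>ys. length ys = length Gs \<longrightarrow> reval A f ys (F ys)" using assms(1) unfolding rc_def by blast
  show ?thesis unfolding rc_def
    by (rule exI[of _ "RComp f gs"]) (auto intro!: reval.intros(5) gs[rule_format] f[rule_format])
qed

lemma rc_comp1: "rc A 1 F \<Longrightarrow> rc A k G \<Longrightarrow> rc A k (\<lambda>xs. F [G xs])"
  using rc_comp[of A "[G]" F k] by simp

lemma rc_comp2: "rc A 2 F \<Longrightarrow> rc A k G \<Longrightarrow> rc A k H \<Longrightarrow> rc A k (\<lambda>xs. F [G xs, H xs])"
  using rc_comp[of A "[G, H]" F k] by (simp add: numeral_2_eq_2)

lemma rc_comp3: "rc A 3 F \<Longrightarrow> rc A k G \<Longrightarrow> rc A k H \<Longrightarrow> rc A k I \<Longrightarrow> rc A k (\<lambda>xs. F [G xs, H xs, I xs])"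
  using rc_comp[of A "[G, H, I]" F k] by (simp add: numeral_3_eq_3)

fun precf :: "(nat list \<Rightarrow> nat) \<Rightarrow> (nat list \<Rightarrow> nat) \<Rightarrow> nat \<Rightarrow> nat list \<Rightarrow> nat" where
  "precf f g 0 xs = f xs" | "precf f g (Suc n) xs = g (precf f g n xs # n # xs)"

lemma rc_prec:
  assumes "rc A k f" "rc A (Suc (Suc k)) g"
  shows "rc A (Suc k) (\<lambda>xs. precf f g (hd xs) (tl xs))"
proof -
  obtain pf where pf: "\<forall>xs. length xs = k \<longrightarrow> reval A pf xs (f xs)" using assms(1) unfolding rc_def by blast
  obtain pg where pg: "\<forall>xs. length xs = Suc (Suc k) \<longrightarrow> reval A pg xs (g xs)" using assms(2) unfolding rc_def by blast
  have "reval A (RPrec pf pg) (n # ys) (precf f g n ys)" if "length ys = k" for n ys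
  proof (induction n)
    case 0 then show ?case using pf that by (auto intro: reval.intros(6))
  next
    case (Suc n) then show ?case using pg that by (auto intro: reval.intros(7))
  qed
  then show ?thesis unfolding rc_def
    by (intro exI[of _ "RPrec pf pg"]) (auto simp: length_Suc_conv)
qed

lemma rc_min:
  assumes "rc A (Suc k) f" "\<And>xs. length xs = k \<Longrightarrow> \<exists>n. f (n # xs) = 0"
  shows "rc A k (\<lambda>xs. LEAST n. f (n # xs) = 0)"
proof -
  obtain pf where pf: "\<forall>xs. length xs = Suc k \<longrightarrow> reval A pf xs (f xs)" using assms(1) unfolding rc_def by blast
  have "reval A (RMin pf) xs (LEAST n. f (n # xs) = 0)" if "length xs = k" for xs
  proof (rule reval.intros(8))
    show "reval A pf ((LEAST n. f (n # xs) = 0) # xs) 0"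
      using pf that LeastI_ex[OF assms(2)[OF that]] by (metis length_Cons)
    show "\<forall>m<(LEAST n. f (n # xs) = 0). \<exists>k. reval A pf (m # xs) (Suc k)"
    proof (intro allI impI)
      fix m assume "m < (LEAST n. f (n # xs) = 0)"
      then have "f (m # xs) \<noteq> 0" using not_less_Least by blast
      then show "\<exists>k. reval A pf (m # xs) (Suc k)" using pf that
        by (metis length_Cons not0_implies_Suc)
    qed
  qed
  then show ?thesis unfolding rc_def by blast
qed

lemma rc_tl: assumes "rc A k G" shows "rc A (Suc k) (\<lambda>ys. G (tl ys))"
proof -
  let ?Gs = "map (\<lambda>i ys. ys ! Suc i) [0..<k]"
  have r: "rc A (Suc k) (\<lambda>xs. G (map (\<lambda>G. G xs) ?Gs))"
    by (rule rc_comp) (use assms in \<open>auto intro: rc_proj\<close>)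
  then show ?thesis
    by (rule rc_cong) (auto simp: length_Suc_conv o_def map_nth)
qed

lemma rc_add2: "rc A 2 (\<lambda>xs. xs!0 + xs!1)"
proof -
  have r: "rc A (Suc 1) (\<lambda>xs. precf (\<lambda>xs. xs!0) (\<lambda>xs. Suc (xs!0)) (hd xs) (tl xs))"
    by (rule rc_prec) (auto intro: rc_proj rc_comp1[OF rc_suc, of _ _ "\<lambda>xs. xs!0", simplified])
  have e: "precf (\<lambda>xs. xs!0) (\<lambda>xs. Suc (xs!0)) n [y] = n + y" for n y by (induction n) auto
  show ?thesis by (rule rc_cong2[OF r]) (auto simp: e[unfolded numeral_2_eq_2 One_nat_def] length_Suc_conv numeral_2_eq_2)
qed

lemma rc_add: "rc A k G \<Longrightarrow> rc A k H \<Longrightarrow> rc A k (\<lambda>xs. G xs + H xs)"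
  using rc_comp2[OF rc_add2] by simp

lemma rc_mult2: "rc A 2 (\<lambda>xs. xs!0 * xs!1)"
proof -
  have r: "rc A (Suc 1) (\<lambda>xs. precf (\<lambda>xs. 0) (\<lambda>xs. xs!0 + xs!2) (hd xs) (tl xs))"
    by (rule rc_prec) (auto intro!: rc_zero rc_add rc_proj)
  have e: "precf (\<lambda>xs. 0) (\<lambda>xs. xs!0 + xs!2) n [y] = n * y" for n y by (induction n) auto
  show ?thesis by (rule rc_cong2[OF r]) (auto simp: e[unfolded numeral_2_eq_2 One_nat_def] length_Suc_conv numeral_2_eq_2)
qed

lemma rc_mult: "rc A k G \<Longrightarrow> rc A k H \<Longrightarrow> rc A k (\<lambda>xs. G xs * H xs)"
  using rc_comp2[OF rc_mult2] by simp

lemma rc_pred1: "rc A 1 (\<lambda>xs. hd xs - 1)"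
proof -
  have r: "rc A (Suc 0) (\<lambda>xs. precf (\<lambda>xs. 0) (\<lambda>xs. xs!1) (hd xs) (tl xs))"
    by (rule rc_prec) (auto intro: rc_zero rc_proj)
  have e: "precf (\<lambda>xs. 0) (\<lambda>xs. xs!1) n [] = n - 1" for n by (cases n) auto
  show ?thesis by (rule rc_cong2[OF r]) (auto simp: e[unfolded numeral_2_eq_2 One_nat_def] length_Suc_conv)
qed

lemma rc_sub2: "rc A 2 (\<lambda>xs. xs!1 - xs!0)"
proof -
  have r: "rc A (Suc 1) (\<lambda>xs. precf (\<lambda>xs. xs!0) (\<lambda>xs. xs!0 - 1) (hd xs) (tl xs))"
    by (rule rc_prec) (auto intro: rc_proj rc_comp1[OF rc_pred1, of _ _ "\<lambda>xs. xs!0", simplified])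
  have e: "precf (\<lambda>xs. xs!0) (\<lambda>xs. xs!0 - 1) n [y] = y - n" for n y by (induction n) auto
  show ?thesis by (rule rc_cong2[OF r]) (auto simp: e[unfolded numeral_2_eq_2 One_nat_def] length_Suc_conv numeral_2_eq_2)
qed

lemma rc_sub: "rc A k G \<Longrightarrow> rc A k H \<Longrightarrow> rc A k (\<lambda>xs. G xs - H xs)"
  using rc_comp2[OF rc_sub2, of A k H G] by simp

lemma rc_Suc: "rc A k G \<Longrightarrow> rc A k (\<lambda>xs. Suc (G xs))"
  using rc_comp1[OF rc_suc] by simp

definition rp :: "nat set \<Rightarrow> nat \<Rightarrow> (nat list \<Rightarrow> bool) \<Rightarrow> bool" where
  "rp A k P \<longleftrightarrow> rc A k (\<lambda>xs. if P xs then 1 else 0)"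

lemma rp_cong: "rp A k P \<Longrightarrow> (\<And>xs. length xs = k \<Longrightarrow> P xs = P' xs) \<Longrightarrow> rp A k P'"
  unfolding rp_def by (erule rc_cong) auto

lemma rp_const: "rp A k (\<lambda>_. b)"
  unfolding rp_def by (cases b) (auto intro: rc_const)

lemma rp_eq: assumes "rc A k G" "rc A k H" shows "rp A k (\<lambda>xs. G xs = H xs)"
proof -
  have "rc A k (\<lambda>xs. 1 - ((G xs - H xs) + (H xs - G xs)))" by (intro rc_sub rc_add rc_const assms)
  then show ?thesis unfolding rp_def by (rule rc_cong) auto
qed

lemma rp_le: assumes "rc A k G" "rc A k H" shows "rp A k (\<lambda>xs. G xs \<le> H xs)"
proof -
  have "rc A k (\<lambda>xs. 1 - (G xs - H xs))" by (intro rc_sub rc_const assms)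
  then show ?thesis unfolding rp_def by (rule rc_cong) auto
qed

lemma rp_not: assumes "rp A k P" shows "rp A k (\<lambda>xs. \<not> P xs)"
proof -
  have "rc A k (\<lambda>xs. 1 - (if P xs then 1 else 0))" by (intro rc_sub rc_const assms[unfolded rp_def])
  then show ?thesis unfolding rp_def by (rule rc_cong) auto
qed

lemma rp_and: assumes "rp A k P" "rp A k Q" shows "rp A k (\<lambda>xs. P xs \<and> Q xs)"
proof -
  have "rc A k (\<lambda>xs. (if P xs then 1 else 0) * (if Q xs then 1 else 0))"
    by (intro rc_mult assms[unfolded rp_def])
  then show ?thesis unfolding rp_def by (rule rc_cong) auto
qed

lemma rp_or: "rp A k P \<Longrightarrow> rp A k Q \<Longrightarrow> rp A k (\<lambda>xs. P xs \<or> Q xs)"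
  using rp_not[OF rp_and[OF rp_not rp_not], of A k P Q] by simp

lemma rp_mem: "rc A k G \<Longrightarrow> rp A k (\<lambda>xs. G xs \<in> A)"
  unfolding rp_def using rc_comp1[OF rc_oracle] by simp

lemma rp_tl: "rp A k P \<Longrightarrow> rp A (Suc k) (\<lambda>ys. P (tl ys))"
  unfolding rp_def using rc_tl by fastforce

lemma rc_if: assumes "rp A k P" "rc A k G" "rc A k H"
  shows "rc A k (\<lambda>xs. if P xs then G xs else H xs)"
proof -
  have "rc A k (\<lambda>xs. (if P xs then 1 else 0) * G xs + (1 - (if P xs then 1 else 0)) * H xs)"
    by (intro rc_add rc_mult rc_sub rc_const assms[unfolded rp_def] assms)
  then show ?thesis by (rule rc_cong) auto
qed

lemma rc_least:
  assumes "rp A (Suc k) P" "\<And>xs. length xs = k \<Longrightarrow> \<exists>n. P (n # xs)"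
  shows "rc A k (\<lambda>xs. LEAST n. P (n # xs))"
proof -
  have r: "rc A k (\<lambda>xs. LEAST n. (if \<not> P (n # xs) then 1 else 0) = (0::nat))"
    by (rule rc_min) (use rp_not[OF assms(1)] assms(2) in \<open>auto simp: rp_def\<close>)
  then show ?thesis by (rule rc_cong) (auto split: if_splits)
qed

lemma rc_tri1: "rc A 1 (\<lambda>xs. triangle (hd xs))"
proof -
  have r: "rc A (Suc 0) (\<lambda>xs. precf (\<lambda>xs. 0) (\<lambda>xs. Suc (xs!0 + xs!1)) (hd xs) (tl xs))"
    by (rule rc_prec) (rule rc_zero, intro rc_Suc rc_add rc_proj, simp_all)
  have e: "precf (\<lambda>xs. 0) (\<lambda>xs. Suc (xs!0 + xs!1)) n [] = triangle n" for n by (induction n) auto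
  show ?thesis by (rule rc_cong2[OF r]) (auto simp: e[unfolded numeral_2_eq_2 One_nat_def] length_Suc_conv)
qed

lemma rc_tri: "rc A k G \<Longrightarrow> rc A k (\<lambda>xs. triangle (G xs))"
  using rc_comp1[OF rc_tri1] by simp

lemma rc_pe: "rc A k G \<Longrightarrow> rc A k H \<Longrightarrow> rc A k (\<lambda>xs. prod_encode (G xs, H xs))"
  unfolding prod_encode_def by (auto intro!: rc_add rc_tri)

lemma tri_gt: "x < triangle (Suc x)" by (induction x) auto

lemma decode_formula:
  fixes x :: nat
  defines "s \<equiv> LEAST s. x < triangle (Suc s)"
  shows "prod_decode x = (x - triangle s, s - (x - triangle s))"
proof -
  have s1: "x < triangle (Suc s)" unfolding s_def by (rule LeastI[of "\<lambda>s. x < triangle (Suc s)" x, OF tri_gt])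
  have s2: "triangle s \<le> x"
  proof (cases s)
    case 0 then show ?thesis by simp
  next
    case (Suc t)
    then have "t < s" by simp
    then have "\<not> x < triangle (Suc t)" unfolding s_def by (rule not_less_Least)
    then show ?thesis using Suc by (simp del: triangle_Suc)
  qed
  have "x - triangle s \<le> s" using s1 s2 by simp
  then have "prod_encode (x - triangle s, s - (x - triangle s)) = x"
    using s2 by (simp add: prod_encode_def)
  then show ?thesis by (metis prod_encode_inverse)
qed

lemma rc_decs: "rc A k G \<Longrightarrow> rc A k (\<lambda>xs. LEAST s. G xs < triangle (Suc s))"
proof -
  assume G: "rc A k G"
  have "rp A (Suc k) (\<lambda>ys. \<not> triangle (Suc (ys!0)) \<le> G (tl ys))"
    by (intro rp_not rp_le rc_tri rc_Suc rc_proj rc_tl[OF G]) simp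
  then have "rc A k (\<lambda>xs. LEAST n. \<not> triangle (Suc ((n # xs)!0)) \<le> G (tl (n # xs)))"
    by (rule rc_least) (auto simp del: triangle_Suc simp: not_le intro: tri_gt)
  then show ?thesis by (rule rc_cong) (simp del: triangle_Suc add: not_le)
qed

lemma rc_fst: assumes "rc A k G" shows "rc A k (\<lambda>xs. fst (prod_decode (G xs)))"
proof -
  have "rc A k (\<lambda>xs. G xs - triangle (LEAST s. G xs < triangle (Suc s)))"
    by (intro rc_sub rc_tri rc_decs assms)
  then show ?thesis by (rule rc_cong) (simp del: triangle_Suc add: decode_formula)
qed

lemma rc_snd: assumes "rc A k G" shows "rc A k (\<lambda>xs. snd (prod_decode (G xs)))"
proof -
  have "rc A k (\<lambda>xs. (LEAST s. G xs < triangle (Suc s)) - (G xs - triangle (LEAST s. G xs < triangle (Suc s))))"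
    by (intro rc_sub rc_tri rc_decs assms)
  then show ?thesis by (rule rc_cong) (simp del: triangle_Suc add: decode_formula)
qed




section \<open>Join of finitely many sets\<close>

definition JN :: "nat set list \<Rightarrow> nat set" where
  "JN L = {prod_encode (i, a) | i a. i < length L \<and> a \<in> L ! i}"

lemma JN_mem: "i < length L \<Longrightarrow> prod_encode (i, a) \<in> JN L \<longleftrightarrow> a \<in> L ! i"
  unfolding JN_def by (auto simp: prod_encode_eq)

lemma rp_JN: "i < length L \<Longrightarrow> rc (JN L) k G \<Longrightarrow> rp (JN L) k (\<lambda>xs. G xs \<in> L ! i)"
  using rp_mem[OF rc_pe[OF rc_const, of "JN L" k G i]] JN_mem by simp

lemma graph_mem: "prod_encode (n, m) \<in> graph_code f \<longleftrightarrow> m = f n"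
  unfolding graph_code_def by (auto simp: prod_encode_eq)

lemma rc_graph:
  assumes "i < length L" "L ! i = graph_code f" "rc (JN L) k G"
  shows "rc (JN L) k (\<lambda>xs. f (G xs))"
proof -
  have "rp (JN L) (Suc k) (\<lambda>ys. prod_encode (G (tl ys), ys ! 0) \<in> L ! i)"
    by (intro rp_JN assms(1) rc_pe rc_tl assms(3) rc_proj) simp
  then have "rc (JN L) k (\<lambda>xs. LEAST m. prod_encode (G (tl (m # xs)), (m # xs) ! 0) \<in> L ! i)"
    by (rule rc_least) (auto simp: assms(2) graph_mem)
  then show ?thesis by (rule rc_cong) (auto simp: assms(2) graph_mem intro!: Least_equality)
qed

lemma turing_le_rp: assumes "rp A 1 (\<lambda>xs. P (hd xs))" shows "turing_le {n. P n} A"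
proof -
  obtain g where g: "\<forall>xs. length xs = 1 \<longrightarrow> reval A g xs (if P (hd xs) then 1 else 0)"
    using assms unfolding rp_def rc_def by blast
  have "reval A g [n] (if n \<in> {n. P n} then 1 else 0)" for n using g[rule_format, of "[n]"] by simp
  then show ?thesis unfolding turing_le_def by blast
qed

lemma rc_hd: "rc A 1 hd"
  by (rule rc_cong[OF rc_proj[of 0 1]]) (auto simp: length_Suc_conv)

lemma scott_turing: "scott_set X \<Longrightarrow> A \<in> X \<Longrightarrow> turing_le B A \<Longrightarrow> B \<in> X"
  unfolding scott_set_def by blast

lemma scott_rp: "scott_set X \<Longrightarrow> A \<in> X \<Longrightarrow> rp A 1 (\<lambda>xs. P (hd xs)) \<Longrightarrow> {n. P n} \<in> X"
  using scott_turing turing_le_rp by blast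

lemma scott_union: "scott_set X \<Longrightarrow> A \<in> X \<Longrightarrow> B \<in> X \<Longrightarrow> A \<union> B \<in> X"
  unfolding scott_set_def by blast

lemma scott_compl: "scott_set X \<Longrightarrow> A \<in> X \<Longrightarrow> - A \<in> X"
  unfolding scott_set_def by blast

lemma scott_empty: "scott_set X \<Longrightarrow> {} \<in> X"
proof -
  assume s: "scott_set X"
  then obtain A where "A \<in> X" unfolding scott_set_def by blast
  then have "A \<union> - A \<in> X" using s scott_union scott_compl by blast
  then have "- (A \<union> - A) \<in> X" using s scott_compl by blast
  then show ?thesis by simp
qed

lemma scott_recursive: "scott_set X \<Longrightarrow> recursive_set B \<Longrightarrow> B \<in> X"
  unfolding recursive_set_def using scott_turing scott_empty by blast

lemma JN_X:
  assumes s: "scott_set X" and L: "\<forall>B\<in>set L. B \<in> X"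
  shows "JN L \<in> X"
proof -
  have piece: "{x. fst (prod_decode x) = i \<and> snd (prod_decode x) \<in> B} \<in> X" if "B \<in> X" for i B
  proof -
    have "rp B 1 (\<lambda>xs. fst (prod_decode (hd xs)) = i \<and> snd (prod_decode (hd xs)) \<in> B)"
      by (intro rp_and rp_eq rc_fst rc_const rp_mem rc_snd rc_hd)
    then show ?thesis using scott_rp[OF s that] by simp
  qed
  have "{x. \<exists>i<n. fst (prod_decode x) = i \<and> snd (prod_decode x) \<in> L ! i} \<in> X" if "n \<le> length L" for n
    using that
  proof (induction n)
    case 0 then show ?case using scott_empty[OF s] by simp
  next
    case (Suc n)
    have "{x. \<exists>i<Suc n. fst (prod_decode x) = i \<and> snd (prod_decode x) \<in> L ! i} =
       {x. \<exists>i<n. fst (prod_decode x) = i \<and> snd (prod_decode x) \<in> L ! i} \<union>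
       {x. fst (prod_decode x) = n \<and> snd (prod_decode x) \<in> L ! n}"
      by (auto simp: less_Suc_eq)
    moreover have "L ! n \<in> X" using L Suc.prems by auto
    ultimately show ?case using Suc piece scott_union[OF s] by simp
  qed
  moreover have "JN L = {x. \<exists>i<length L. fst (prod_decode x) = i \<and> snd (prod_decode x) \<in> L ! i}"
    unfolding JN_def by (auto, metis prod.collapse prod_decode_inverse)
  ultimately show ?thesis by simp
qed

lemma tval_cong: "(\<forall>i\<in>fvt t. e i = e' i) \<Longrightarrow> (\<forall>i\<in>cst_t t. c i = c' i) \<Longrightarrow> tval M c e t = tval M c' e' t"
  by (induction t) auto

lemma sat_cong: "(\<forall>i\<in>fv p. e i = e' i) \<Longrightarrow> (\<forall>i\<in>csts p. c i = c' i) \<Longrightarrow> sat M c e p = sat M c' e' p"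
proof (induction p arbitrary: e e')
  case (FEq a b) then show ?case using tval_cong[of a e e' c c' M] tval_cong[of b e e' c c' M] by auto
next
  case (FLt a b) then show ?case using tval_cong[of a e e' c c' M] tval_cong[of b e e' c c' M] by auto
next
  case (FNeg p) then show ?case by auto
next
  case (FImp p q)
  have "sat M c e p = sat M c' e' p" "sat M c e q = sat M c' e' q"
    using FImp.prems by (auto intro!: FImp.IH)
  then show ?case by simp
next
  case (FAll x p)
  have "sat M c (e(x := a)) p = sat M c' (e'(x := a)) p" for a
    by (rule FAll.IH) (use FAll.prems in auto)
  then show ?case by simp
qed

lemma sat_langA: "langA p \<Longrightarrow> (\<forall>i\<in>fv p. e i = e' i) \<Longrightarrow> sat M c e p = sat M c' e' p"
  using sat_cong unfolding langA_def by blast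

lemma code_t_inj: "code_t s = code_t t \<Longrightarrow> s = t"
proof (induction s arbitrary: t)
  case (TVar n) then show ?case by (cases t) (auto simp: prod_encode_eq)
next
  case (TCst n) then show ?case by (cases t) (auto simp: prod_encode_eq)
next
  case TZero then show ?case by (cases t) (auto simp: prod_encode_eq)
next
  case TOne then show ?case by (cases t) (auto simp: prod_encode_eq)
next
  case (TPlus a b) then show ?case by (cases t) (auto simp: prod_encode_eq)
next
  case (TTimes a b) then show ?case by (cases t) (auto simp: prod_encode_eq)
qed

lemma code_inj_eq: "code p = code q \<Longrightarrow> p = q"
proof (induction p arbitrary: q)
  case (FEq a b) then show ?case by (cases q) (auto simp: prod_encode_eq dest: code_t_inj)
next
  case (FLt a b) then show ?case by (cases q) (auto simp: prod_encode_eq dest: code_t_inj)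
next
  case (FNeg p) then show ?case by (cases q) (auto simp: prod_encode_eq)
next
  case (FImp p1 p2) then show ?case by (cases q) (auto simp: prod_encode_eq)
next
  case (FAll x p) then show ?case by (cases q) (auto simp: prod_encode_eq)
qed

lemma inj_code: "inj code"
  using code_inj_eq by (auto intro: injI)

lemma in_ediag: "code p \<in> ediag M \<longleftrightarrow> sentence p \<and> csts p \<subseteq> dm M \<and> sat M id (\<lambda>_. zr M) p"
  unfolding ediag_def using code_inj_eq by blast

fun bindf :: "(nat \<times> nat) list \<Rightarrow> fm \<Rightarrow> fm" where
  "bindf [] p = p"
| "bindf ((y, v) # r) p = FAll y (FImp (FEq (TVar y) (TCst v)) (bindf r p))"

lemma fv_bindf: "fv (bindf r p) = fv p - fst ` set r"
proof (induction r)
  case (Cons yv r) then show ?case by (cases yv) auto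
qed simp

lemma csts_bindf: "csts (bindf r p) = csts p \<union> snd ` set r"
proof (induction r)
  case (Cons yv r) then show ?case by (cases yv) auto
qed simp

lemma sat_bindf: "(\<forall>(y, v)\<in>set r. v \<in> dm M) \<Longrightarrow>
   sat M id e (bindf r p) = sat M id (foldl (\<lambda>e (y, v). e(y := v)) e r) p"
proof (induction r arbitrary: e)
  case (Cons yv r) then show ?case by (cases yv) (auto simp: fun_upd_def)
qed simp

lemma foldl_upd: "foldl (\<lambda>e (y, v). e(y := v)) e (map (\<lambda>y. (y, f y)) ys) = (\<lambda>i. if i \<in> set ys then f i else e i)"
  by (induction ys arbitrary: e) (auto simp: fun_eq_iff)

lemma ediag_bind:
  assumes "langA p" "fv p \<subseteq> set ys"
  shows "code (bindf (map (\<lambda>y. (y, f y)) ys) p) \<in> ediag M \<longleftrightarrow> (\<forall>y\<in>set ys. f y \<in> dm M) \<and> sat M c f p"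
proof -
  have sen: "sentence (bindf (map (\<lambda>y. (y, f y)) ys) p)"
    using assms(2) unfolding sentence_def fv_bindf by (auto simp: image_image)
  have cs: "csts (bindf (map (\<lambda>y. (y, f y)) ys) p) = f ` set ys"
    using assms(1) unfolding csts_bindf langA_def by (auto simp: image_image)
  show ?thesis
  proof (cases "\<forall>y\<in>set ys. f y \<in> dm M")
    case True
    then have "sat M id (\<lambda>_. zr M) (bindf (map (\<lambda>y. (y, f y)) ys) p) =
        sat M id (\<lambda>i. if i \<in> set ys then f i else zr M) p"
      by (subst sat_bindf) (auto simp: foldl_upd)
    also have "\<dots> = sat M c f p" by (rule sat_langA[OF assms(1)]) (use assms(2) in auto)
    finally show ?thesis using True sen cs in_ediag by auto
  next
    case False then show ?thesis using cs in_ediag by auto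
  qed
qed

lemma code_bindf_cons: "code (bindf ((y, v) # r) p) =
  prod_encode (4, prod_encode (y, prod_encode (3, prod_encode (prod_encode (0, prod_encode (prod_encode (0, y), prod_encode (1, v))), code (bindf r p)))))"
  by simp

declare bindf.simps(2)[simp del]

lemma rc_code_bind_cons:
  assumes "rc A k (\<lambda>xs. code (bindf (R xs) (P xs)))" "rc A k V"
  shows "rc A k (\<lambda>xs. code (bindf ((y, V xs) # R xs) (P xs)))"
  unfolding code_bindf_cons by (intro rc_pe rc_const assms)

lemma rc_code_bind:
  assumes "\<forall>y\<in>set ys. \<exists>i<length L. L ! i = graph_code (f y)" "rc (JN L) k N" "rc (JN L) k (\<lambda>xs. code (P xs))"
  shows "rc (JN L) k (\<lambda>xs. code (bindf (map (\<lambda>y. (y, f y (N xs))) ys) (P xs)))"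
  using assms(1)
proof (induction ys)
  case Nil then show ?case using assms(3) by simp
next
  case (Cons y ys)
  then obtain i where "i < length L" "L ! i = graph_code (f y)" by auto
  then have "rc (JN L) k (\<lambda>xs. f y (N xs))" using rc_graph assms(2) by blast
  then show ?case using rc_code_bind_cons Cons by simp
qed

lemma sat_FEx: "sat M c e (FEx x p) \<longleftrightarrow> (\<exists>a\<in>dm M. sat M c (e(x := a)) p)"
  unfolding FEx_def by simp

lemma sat_FConj: "sat M c e (FConj p q) \<longleftrightarrow> sat M c e p \<and> sat M c e q"
  unfolding FConj_def by simp




lemma finite_fvt: "finite (fvt t)" by (induction t) auto
lemma finite_fv: "finite (fv p)" by (induction p) (auto simp: finite_fvt)

lemma langA_FEx: "langA (FEx x p) = langA p" unfolding langA_def FEx_def by simp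
lemma fv_FEx: "fv (FEx x p) = fv p - {x}" unfolding FEx_def by simp

lemma idx_graph:
  "\<forall>y\<in>set ys. \<exists>i<length (a # map (\<lambda>y. graph_code (f y)) ys @ ex). (a # map (\<lambda>y. graph_code (f y)) ys @ ex) ! i = graph_code (f y)"
proof
  fix y assume "y \<in> set ys"
  then obtain j where j: "j < length ys" "ys ! j = y" by (auto simp: in_set_conv_nth)
  then show "\<exists>i<length (a # map (\<lambda>y. graph_code (f y)) ys @ ex). (a # map (\<lambda>y. graph_code (f y)) ys @ ex) ! i = graph_code (f y)"
    by (intro exI[of _ "Suc j"]) (auto simp: nth_append)
qed

lemma rp_bind:
  assumes "\<forall>y\<in>set ys. \<exists>i<length L. L ! i = graph_code (f y)" "0 < length L"
    "rc (JN L) k N" "rc (JN L) k (\<lambda>xs. code (P xs))"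
  shows "rp (JN L) k (\<lambda>xs. code (bindf (map (\<lambda>y. (y, f y (N xs))) ys) (P xs)) \<in> L ! 0)"
  by (intro rp_JN assms(2) rc_code_bind assms(1,3,4))

lemma rp_bind_cons:
  assumes "\<forall>y\<in>set ys. \<exists>i<length L. L ! i = graph_code (f y)" "0 < length L"
    "rc (JN L) k N" "rc (JN L) k V" "rc (JN L) k (\<lambda>xs. code (P xs))"
  shows "rp (JN L) k (\<lambda>xs. code (bindf ((z, V xs) # map (\<lambda>y. (y, f y (N xs))) ys) (P xs)) \<in> L ! 0)"
  by (intro rp_JN assms(2) rc_code_bind_cons rc_code_bind assms(1,3,4,5))

lemma Least_eq_self[simp]: "(LEAST m. m = (a::nat)) = a"
  by (rule Least_equality) auto

lemma ediag_bind_cons: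
  assumes "langA p" "z \<notin> set ys" "fv p \<subseteq> insert z (set ys)"
  shows "code (bindf ((z, a) # map (\<lambda>y. (y, f y)) ys) p) \<in> ediag M \<longleftrightarrow>
     a \<in> dm M \<and> (\<forall>y\<in>set ys. f y \<in> dm M) \<and> sat M c (f(z := a)) p"
proof -
  have m: "map (\<lambda>y. (y, (f(z := a)) y)) (z # ys) = (z, a) # map (\<lambda>y. (y, f y)) ys"
    using assms(2) by (auto intro!: map_cong)
  have e: "code (bindf (map (\<lambda>y. (y, (f(z := a)) y)) (z # ys)) p) \<in> ediag M \<longleftrightarrow>
     (\<forall>y\<in>set (z # ys). (f(z := a)) y \<in> dm M) \<and> sat M c (f(z := a)) p"
    by (rule ediag_bind[OF assms(1)]) (use assms(3) in auto)
  have d: "(\<forall>y\<in>set (z # ys). (f(z := a)) y \<in> dm M) \<longleftrightarrow> a \<in> dm M \<and> (\<forall>y\<in>set ys. f y \<in> dm M)"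
    using assms(2) by auto
  show ?thesis using e[unfolded m d] by blast
qed

lemma tval_dm: "is_struc M \<Longrightarrow> cst_t t = {} \<Longrightarrow> \<forall>i\<in>fvt t. e i \<in> dm M \<Longrightarrow> tval M c e t \<in> dm M"
  by (induction t) (auto simp: is_struc_def)

locale upw =
  fixes X :: "nat set set" and M :: "nat struc" and U :: "nat set set"
  assumes sX: "scott_set X" and strM: "is_struc M" and cod: "coded_in M X"
    and uf: "ultrafilter_on X U" and np: "nonprincipal U"
begin

abbreviation "PX \<equiv> prodX X M"
abbreviation "KK \<equiv> ultrapower X M U"
abbreviation "cls \<equiv> ucls X M U"

lemma ediagX: "ediag M \<in> X" using cod unfolding coded_in_def by simp

lemma PX_dm: "f \<in> PX \<Longrightarrow> f n \<in> dm M" unfolding prodX_def by simp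
lemma PX_graph: "f \<in> PX \<Longrightarrow> graph_code f \<in> X" unfolding prodX_def by simp

lemma zr_dm: "zr M \<in> dm M" using strM unfolding is_struc_def by simp

lemma graph_code_eq: "graph_code F = {x. snd (prod_decode x) = F (fst (prod_decode x))}"
  unfolding graph_code_def by (auto, metis prod.collapse prod_decode_inverse)

lemma PX_intro:
  assumes "\<And>n. F n \<in> dm M" "J \<in> X" "rc J 1 (\<lambda>xs. F (hd xs))"
  shows "F \<in> PX"
proof -
  have "rc J 1 (\<lambda>xs. (\<lambda>xs. F (hd xs)) [fst (prod_decode (hd xs))])"
    by (intro rc_comp1 assms(3) rc_fst rc_hd)
  then have "rc J 1 (\<lambda>xs. F (fst (prod_decode (hd xs))))" by simp
  then have "rp J 1 (\<lambda>xs. snd (prod_decode (hd xs)) = F (fst (prod_decode (hd xs))))"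
    by (intro rp_eq rc_snd rc_hd)
  then have "graph_code F \<in> X" unfolding graph_code_eq using scott_rp[OF sX assms(2)] by simp
  then show ?thesis unfolding prodX_def using assms(1) by simp
qed

lemma const_PX: "c \<in> dm M \<Longrightarrow> (\<lambda>_. c) \<in> PX"
  by (rule PX_intro[OF _ ediagX]) (auto intro: rc_const)

definition LL :: "(nat \<Rightarrow> nat \<Rightarrow> nat) \<Rightarrow> nat list \<Rightarrow> nat set list \<Rightarrow> nat set list" where
  "LL f ys ex = ediag M # map (\<lambda>y. graph_code (f y)) ys @ ex"

lemma LL_X: "\<forall>i. f i \<in> PX \<Longrightarrow> \<forall>B\<in>set ex. B \<in> X \<Longrightarrow> JN (LL f ys ex) \<in> X"
  unfolding LL_def by (intro JN_X sX) (auto intro: ediagX PX_graph)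

lemma LL_idx: "\<forall>y\<in>set ys. \<exists>i<length (LL f ys ex). LL f ys ex ! i = graph_code (f y)"
  unfolding LL_def by (rule idx_graph)

lemma LL_0: "LL f ys ex ! 0 = ediag M" "0 < length (LL f ys ex)"
  unfolding LL_def by auto

lemma LL_ex: "j < length ex \<Longrightarrow> LL f ys ex ! (Suc (length ys + j)) = ex ! j"
  "j < length ex \<Longrightarrow> Suc (length ys + j) < length (LL f ys ex)"
  unfolding LL_def by (auto simp: nth_append)

lemma KEY:
  assumes "langA p" "\<forall>i. f i \<in> PX"
  shows "{n. sat M c (\<lambda>i. f i n) p} \<in> X"
proof -
  define ys where "ys = sorted_list_of_set (fv p)"
  have ys: "set ys = fv p" unfolding ys_def by (simp add: finite_fv)
  let ?L = "LL f ys []"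
  have JX: "JN ?L \<in> X" by (rule LL_X) (auto simp: assms)
  have "rp (JN ?L) 1 (\<lambda>xs. code (bindf (map (\<lambda>y. (y, f y (hd xs))) ys) ((\<lambda>_. p) xs)) \<in> ?L ! 0)"
    by (intro rp_bind LL_idx LL_0 rc_hd rc_const)
  then have "rp (JN ?L) 1 (\<lambda>xs. (\<lambda>n. code (bindf (map (\<lambda>y. (y, f y n)) ys) p) \<in> ediag M) (hd xs))"
    by (simp add: LL_0)
  from scott_rp[OF sX JX this] have "{n. code (bindf (map (\<lambda>y. (y, f y n)) ys) p) \<in> ediag M} \<in> X"
    by simp
  moreover have "code (bindf (map (\<lambda>y. (y, f y n)) ys) p) \<in> ediag M \<longleftrightarrow> sat M c (\<lambda>i. f i n) p" for n
    using ediag_bind[OF assms(1), of ys "\<lambda>i. f i n" M c] ys PX_dm assms(2) by auto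
  ultimately show ?thesis by simp
qed

lemma TV:
  assumes "cst_t t = {}" "\<forall>i. f i \<in> PX"
  shows "(\<lambda>n. tval M c (\<lambda>i. f i n) t) \<in> PX"
proof -
  obtain z where z: "z \<notin> fvt t" using ex_new_if_finite[OF infinite_UNIV_nat finite_fvt] by blast
  define ys where "ys = sorted_list_of_set (fvt t)"
  have ys: "set ys = fvt t" unfolding ys_def by (simp add: finite_fvt)
  define P where "P = FEq (TVar z) t"
  have lP: "langA P" unfolding P_def langA_def using assms(1) by simp
  have fP: "fv P \<subseteq> insert z (set ys)" unfolding P_def using ys by auto
  have zy: "z \<notin> set ys" using z ys by simp
  define F where "F = (\<lambda>n. tval M c (\<lambda>i. f i n) t)"
  have Fdm: "F n \<in> dm M" for n unfolding F_def
    using tval_dm[OF strM assms(1)] PX_dm assms(2) by auto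
  have sem: "code (bindf ((z, m) # map (\<lambda>y. (y, f y n)) ys) P) \<in> ediag M \<longleftrightarrow> m = F n" for m n
  proof -
    have "tval M c ((\<lambda>i. f i n)(z := m)) t = F n" unfolding F_def
      by (rule tval_cong) (use z in auto)
    then show ?thesis using ediag_bind_cons[OF lP zy fP, of m "\<lambda>i. f i n" M c] PX_dm assms(2) Fdm
      by (auto simp: P_def)
  qed
  let ?L = "LL f ys []"
  have "rp (JN ?L) (Suc 1) (\<lambda>xs. code (bindf ((z, xs ! 0) # map (\<lambda>y. (y, f y (xs ! 1))) ys) ((\<lambda>_. P) xs)) \<in> ?L ! 0)"
    by (intro rp_bind_cons LL_idx LL_0 rc_proj rc_const) auto
  then have "rc (JN ?L) 1 (\<lambda>xs. LEAST m. code (bindf ((z, (m # xs) ! 0) # map (\<lambda>y. (y, f y ((m # xs) ! 1))) ys) P) \<in> ?L ! 0)"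
    by (rule rc_least) (auto simp: LL_0 sem)
  then have "rc (JN ?L) 1 (\<lambda>xs. F (hd xs))"
    by (rule rc_cong) (auto simp: LL_0 sem length_Suc_conv)
  then have "F \<in> PX" by (intro PX_intro[OF Fdm LL_X[OF assms(2)]]) auto
  then show ?thesis unfolding F_def .
qed

lemma WIT:
  assumes "langA p" "\<forall>i. f i \<in> PX"
  shows "\<exists>g\<in>PX. \<forall>n. (\<exists>a\<in>dm M. sat M c ((\<lambda>i. f i n)(x := a)) p) \<longrightarrow> sat M c ((\<lambda>i. f i n)(x := g n)) p"
proof -
  define ys where "ys = sorted_list_of_set (fv p - {x})"
  have ys: "set ys = fv p - {x}" unfolding ys_def by (simp add: finite_fv)
  have xy: "x \<notin> set ys" using ys by simp
  have fp: "fv p \<subseteq> insert x (set ys)" using ys by auto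
  have lE: "langA (FEx x p)" using assms(1) langA_FEx by simp
  have fE: "fv (FEx x p) \<subseteq> set ys" using ys fv_FEx by auto
  define Ex where "Ex = (\<lambda>n. \<exists>a\<in>dm M. sat M c ((\<lambda>i. f i n)(x := a)) p)"
  define W where "W = (\<lambda>n a. a \<in> dm M \<and> sat M c ((\<lambda>i. f i n)(x := a)) p)"
  have semE: "code (bindf (map (\<lambda>y. (y, f y n)) ys) (FEx x p)) \<in> ediag M \<longleftrightarrow> Ex n" for n
    using ediag_bind[OF lE fE, of "\<lambda>i. f i n" M c] PX_dm assms(2) unfolding Ex_def by (auto simp: sat_FEx)
  have semW: "code (bindf ((x, a) # map (\<lambda>y. (y, f y n)) ys) p) \<in> ediag M \<longleftrightarrow> W n a" for n a
    using ediag_bind_cons[OF assms(1) xy fp, of a "\<lambda>i. f i n" M c] PX_dm assms(2) unfolding W_def by auto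
  define g where "g = (\<lambda>n. if Ex n then LEAST a. W n a \<or> \<not> Ex n else zr M)"
  have gW: "Ex n \<Longrightarrow> W n (g n)" for n
  proof -
    assume e: "Ex n"
    then obtain a where "W n a" unfolding Ex_def W_def by blast
    then have "W n (LEAST a. W n a \<or> \<not> Ex n)" using e by (metis (mono_tags, lifting) LeastI)
    then show ?thesis using e unfolding g_def by simp
  qed
  have gdm: "g n \<in> dm M" for n using gW[of n] zr_dm unfolding g_def W_def by (cases "Ex n") auto
  let ?L = "LL f ys []"
  have rE: "rp (JN ?L) k (\<lambda>xs. Ex (N xs))" if "rc (JN ?L) k N" for k N
  proof -
    have "rp (JN ?L) k (\<lambda>xs. code (bindf (map (\<lambda>y. (y, f y (N xs))) ys) ((\<lambda>_. FEx x p) xs)) \<in> ?L ! 0)"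
      by (intro rp_bind LL_idx LL_0 that rc_const)
    then show ?thesis by (rule rp_cong) (simp add: LL_0 semE)
  qed
  have rW: "rp (JN ?L) (Suc 1) (\<lambda>xs. W (xs ! 1) (xs ! 0))"
  proof -
    have "rp (JN ?L) (Suc 1) (\<lambda>xs. code (bindf ((x, xs ! 0) # map (\<lambda>y. (y, f y (xs ! 1))) ys) ((\<lambda>_. p) xs)) \<in> ?L ! 0)"
      by (intro rp_bind_cons LL_idx LL_0 rc_proj rc_const) auto
    then show ?thesis by (rule rp_cong) (simp add: LL_0 semW)
  qed
  have "rp (JN ?L) (Suc 1) (\<lambda>xs. W (xs ! 1) (xs ! 0) \<or> \<not> Ex (xs ! 1))"
    by (intro rp_or rW rp_not rE rc_proj) simp
  then have "rc (JN ?L) 1 (\<lambda>xs. LEAST a. W ((a # xs) ! 1) ((a # xs) ! 0) \<or> \<not> Ex ((a # xs) ! 1))"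
    by (rule rc_least) (auto simp: Ex_def W_def)
  then have "rc (JN ?L) 1 (\<lambda>xs. if Ex (hd xs) then (LEAST a. W ((a # xs) ! 1) ((a # xs) ! 0) \<or> \<not> Ex ((a # xs) ! 1)) else zr M)"
    by (intro rc_if rE rc_hd rc_const)
  then have "rc (JN ?L) 1 (\<lambda>xs. g (hd xs))"
    by (rule rc_cong) (auto simp: g_def length_Suc_conv)
  then have "g \<in> PX" by (intro PX_intro[OF gdm LL_X[OF assms(2)]]) auto
  moreover have "\<forall>n. Ex n \<longrightarrow> sat M c ((\<lambda>i. f i n)(x := g n)) p" using gW unfolding W_def by blast
  ultimately show ?thesis unfolding Ex_def by blast
qed

end



context upw begin

lemma U_X: "A \<in> U \<Longrightarrow> A \<in> X" using uf unfolding ultrafilter_on_def by blast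
lemma U_int: "A \<in> U \<Longrightarrow> B \<in> U \<Longrightarrow> A \<inter> B \<in> U" using uf unfolding ultrafilter_on_def by blast
lemma U_sup: "A \<in> U \<Longrightarrow> B \<in> X \<Longrightarrow> A \<subseteq> B \<Longrightarrow> B \<in> U" using uf unfolding ultrafilter_on_def by blast
lemma U_cases: "A \<in> X \<Longrightarrow> A \<in> U \<or> - A \<in> U" using uf unfolding ultrafilter_on_def by blast
lemma U_empty: "{} \<notin> U" using uf unfolding ultrafilter_on_def by blast
lemma U_UNIV: "UNIV \<in> U" using uf unfolding ultrafilter_on_def by blast

lemma U_compl: "A \<in> X \<Longrightarrow> - A \<in> U \<longleftrightarrow> A \<notin> U"
proof
  assume "A \<in> X" "- A \<in> U"
  show "A \<notin> U"
  proof
    assume "A \<in> U"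
    then have "A \<inter> - A \<in> U" using U_int \<open>- A \<in> U\<close> by blast
    then show False using U_empty by simp
  qed
qed (use U_cases in blast)

lemma U_agree:
  assumes "A \<in> X" "B \<in> X" "D \<in> U" "\<And>n. n \<in> D \<Longrightarrow> n \<in> A \<longleftrightarrow> n \<in> B"
  shows "A \<in> U \<longleftrightarrow> B \<in> U"
proof
  assume "A \<in> U"
  then have "A \<inter> D \<in> U" using U_int assms(3) by blast
  then show "B \<in> U" by (rule U_sup[OF _ assms(2)]) (use assms(4) in auto)
next
  assume "B \<in> U"
  then have "B \<inter> D \<in> U" using U_int assms(3) by blast
  then show "A \<in> U" by (rule U_sup[OF _ assms(1)]) (use assms(4) in auto)
qed

definition fam2 :: "(nat \<Rightarrow> nat) \<Rightarrow> (nat \<Rightarrow> nat) \<Rightarrow> nat \<Rightarrow> nat \<Rightarrow> nat" where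
  "fam2 F G = (\<lambda>i. if i = 0 then F else if i = Suc 0 then G else (\<lambda>_. zr M))"

lemma fam2_PX: "F \<in> PX \<Longrightarrow> G \<in> PX \<Longrightarrow> \<forall>i. fam2 F G i \<in> PX"
  unfolding fam2_def using const_PX zr_dm by auto

lemma eqX: "F \<in> PX \<Longrightarrow> G \<in> PX \<Longrightarrow> {n. F n = G n} \<in> X"
  using KEY[of "FEq (TVar 0) (TVar 1)" "fam2 F G" id] fam2_PX by (simp add: langA_def fam2_def)

lemma ltX: "F \<in> PX \<Longrightarrow> G \<in> PX \<Longrightarrow> {n. lt M (F n) (G n)} \<in> X"
  using KEY[of "FLt (TVar 0) (TVar 1)" "fam2 F G" id] fam2_PX by (simp add: langA_def fam2_def)

lemma adPX: "F \<in> PX \<Longrightarrow> G \<in> PX \<Longrightarrow> (\<lambda>n. ad M (F n) (G n)) \<in> PX"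
  using TV[of "TPlus (TVar 0) (TVar 1)" "fam2 F G" id] fam2_PX by (simp add: fam2_def)

lemma mlPX: "F \<in> PX \<Longrightarrow> G \<in> PX \<Longrightarrow> (\<lambda>n. ml M (F n) (G n)) \<in> PX"
  using TV[of "TTimes (TVar 0) (TVar 1)" "fam2 F G" id] fam2_PX by (simp add: fam2_def)

lemma cls_self: "F \<in> PX \<Longrightarrow> F \<in> cls F"
  unfolding ucls_def using U_UNIV by simp

lemma cls_eq:
  assumes "F \<in> PX" "G \<in> PX"
  shows "cls F = cls G \<longleftrightarrow> {n. F n = G n} \<in> U"
proof
  assume "cls F = cls G"
  then have "G \<in> cls F" using cls_self[OF assms(2)] by simp
  then show "{n. F n = G n} \<in> U" unfolding ucls_def by simp
next
  assume FG: "{n. F n = G n} \<in> U"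
  show "cls F = cls G"
  proof (rule set_eqI)
    fix H
    show "H \<in> cls F \<longleftrightarrow> H \<in> cls G"
    proof (cases "H \<in> PX")
      case True
      have "{n. F n = H n} \<in> U \<longleftrightarrow> {n. G n = H n} \<in> U"
        by (rule U_agree[OF eqX eqX FG]) (use assms True in auto)
      then show ?thesis unfolding ucls_def using True by simp
    next
      case False then show ?thesis unfolding ucls_def by simp
    qed
  qed
qed

lemma urep_cls: assumes "F \<in> PX" shows "urep (cls F) \<in> PX" "{n. urep (cls F) n = F n} \<in> U"
proof -
  have "urep (cls F) \<in> cls F" unfolding urep_def by (rule someI[of "\<lambda>f. f \<in> cls F", OF cls_self[OF assms]])
  then have a: "urep (cls F) \<in> PX" "{n. F n = urep (cls F) n} \<in> U" unfolding ucls_def by auto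
  show "urep (cls F) \<in> PX" by (rule a)
  show "{n. urep (cls F) n = F n} \<in> U" using a(2) by (simp add: eq_commute)
qed

lemma dmK: "dm KK = cls ` PX" unfolding ultrapower_def by simp

lemma urep_dm: assumes "a \<in> dm KK" shows "urep a \<in> PX" "a = cls (urep a)"
proof -
  obtain F where F: "F \<in> PX" "a = cls F" using assms dmK by auto
  show "urep a \<in> PX" using urep_cls(1)[OF F(1)] F(2) by simp
  have "cls (urep (cls F)) = cls F"
    using cls_eq[OF urep_cls(1)[OF F(1)] F(1)] urep_cls(2)[OF F(1)] by simp
  then show "a = cls (urep a)" using F(2) by simp
qed

lemma cls_dm: "F \<in> PX \<Longrightarrow> cls F \<in> dm KK" using dmK by auto

lemma cls_op:
  assumes op: "\<And>F G. F \<in> PX \<Longrightarrow> G \<in> PX \<Longrightarrow> (\<lambda>n. h (F n) (G n)) \<in> PX" and "Fa \<in> PX" "Fb \<in> PX"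
  shows "cls (\<lambda>n. h (urep (cls Fa) n) (urep (cls Fb) n)) = cls (\<lambda>n. h (Fa n) (Fb n))"
proof -
  have i: "urep (cls Fa) \<in> PX" "urep (cls Fb) \<in> PX" using urep_cls assms by auto
  have D: "{n. urep (cls Fa) n = Fa n} \<inter> {n. urep (cls Fb) n = Fb n} \<in> U"
    using urep_cls(2) assms U_int by blast
  have "{n. h (urep (cls Fa) n) (urep (cls Fb) n) = h (Fa n) (Fb n)} \<in> U"
    by (rule U_sup[OF D eqX]) (use op i assms in auto)
  then show ?thesis using cls_eq op i assms by blast
qed

lemma los_t:
  assumes "cst_t t = {}" "\<forall>i. E i \<in> dm KK"
  shows "tval KK cK E t = cls (\<lambda>n. tval M cM (\<lambda>i. urep (E i) n) t)"
  using assms(1)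
proof (induction t)
  case (TVar i) then show ?case using urep_dm(2) assms(2) by simp
next
  case TZero then show ?case by (simp add: ultrapower_def)
next
  case TOne then show ?case by (simp add: ultrapower_def)
next
  case (TPlus a b)
  have PXa: "(\<lambda>n. tval M cM (\<lambda>i. urep (E i) n) a) \<in> PX" and PXb: "(\<lambda>n. tval M cM (\<lambda>i. urep (E i) n) b) \<in> PX"
    using TV TPlus.prems urep_dm(1) assms(2) by auto
  show ?case using TPlus cls_op[OF adPX PXa PXb] by (simp add: ultrapower_def)
next
  case (TTimes a b)
  have PXa: "(\<lambda>n. tval M cM (\<lambda>i. urep (E i) n) a) \<in> PX" and PXb: "(\<lambda>n. tval M cM (\<lambda>i. urep (E i) n) b) \<in> PX"
    using TV TTimes.prems urep_dm(1) assms(2) by auto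
  show ?case using TTimes cls_op[OF mlPX PXa PXb] by (simp add: ultrapower_def)
qed simp

lemma los:
  assumes "langA p" "\<forall>i. E i \<in> dm KK"
  shows "sat KK cK E p \<longleftrightarrow> {n. sat M cM (\<lambda>i. urep (E i) n) p} \<in> U"
  using assms
proof (induction p arbitrary: E)
  case (FEq a b)
  have c: "cst_t a = {}" "cst_t b = {}" using FEq.prems(1) unfolding langA_def by auto
  have PXa: "(\<lambda>n. tval M cM (\<lambda>i. urep (E i) n) a) \<in> PX" and PXb: "(\<lambda>n. tval M cM (\<lambda>i. urep (E i) n) b) \<in> PX"
    using TV c urep_dm(1) FEq.prems(2) by auto
  show ?case using los_t[OF c(1) FEq.prems(2), where cK=cK and cM=cM] los_t[OF c(2) FEq.prems(2), where cK=cK and cM=cM] cls_eq[OF PXa PXb] by simp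
next
  case (FLt a b)
  have c: "cst_t a = {}" "cst_t b = {}" using FLt.prems(1) unfolding langA_def by auto
  let ?Fa = "\<lambda>n. tval M cM (\<lambda>i. urep (E i) n) a" and ?Fb = "\<lambda>n. tval M cM (\<lambda>i. urep (E i) n) b"
  have PXa: "?Fa \<in> PX" and PXb: "?Fb \<in> PX"
    using TV c urep_dm(1) FLt.prems(2) by auto
  have D: "{n. urep (cls ?Fa) n = ?Fa n} \<inter> {n. urep (cls ?Fb) n = ?Fb n} \<in> U"
    using urep_cls(2) PXa PXb U_int by blast
  have "{n. lt M (urep (cls ?Fa) n) (urep (cls ?Fb) n)} \<in> U \<longleftrightarrow> {n. lt M (?Fa n) (?Fb n)} \<in> U"
    by (rule U_agree[OF ltX ltX D]) (use urep_cls(1) PXa PXb in auto)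
  moreover have ta: "tval KK cK E a = cls ?Fa" by (rule los_t[OF c(1) FLt.prems(2)])
  moreover have tb: "tval KK cK E b = cls ?Fb" by (rule los_t[OF c(2) FLt.prems(2)])
  ultimately show ?case by (simp only: sat.simps ta tb) (simp add: ultrapower_def)
next
  case (FNeg p)
  have l: "langA p" using FNeg.prems(1) unfolding langA_def by simp
  have X: "{n. sat M cM (\<lambda>i. urep (E i) n) p} \<in> X"
    using KEY[OF l] urep_dm(1) FNeg.prems(2) by auto
  have "{n. sat M cM (\<lambda>i. urep (E i) n) (FNeg p)} = - {n. sat M cM (\<lambda>i. urep (E i) n) p}" by auto
  then show ?case using FNeg.IH[OF l FNeg.prems(2)] U_compl[OF X] by simp
next
  case (FImp p q)
  have l: "langA p" "langA q" using FImp.prems(1) unfolding langA_def by auto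
  define P where "P = {n. sat M cM (\<lambda>i. urep (E i) n) p}"
  define Q where "Q = {n. sat M cM (\<lambda>i. urep (E i) n) q}"
  have X: "P \<in> X" "Q \<in> X" unfolding P_def Q_def using KEY l urep_dm(1) FImp.prems(2) by auto
  have XX: "- P \<union> Q \<in> X" using X scott_union scott_compl sX by blast
  have e: "{n. sat M cM (\<lambda>i. urep (E i) n) (FImp p q)} = - P \<union> Q" unfolding P_def Q_def by auto
  have "(P \<in> U \<longrightarrow> Q \<in> U) \<longleftrightarrow> - P \<union> Q \<in> U"
  proof
    assume h: "P \<in> U \<longrightarrow> Q \<in> U"
    show "- P \<union> Q \<in> U"
    proof (cases "P \<in> U")
      case True then show ?thesis using h U_sup[OF _ XX] by blast
    next
      case False then show ?thesis using U_compl[OF X(1)] U_sup[OF _ XX] by blast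
    qed
  next
    assume h: "- P \<union> Q \<in> U"
    show "P \<in> U \<longrightarrow> Q \<in> U"
    proof
      assume "P \<in> U"
      then have "P \<inter> (- P \<union> Q) \<in> U" using h U_int by blast
      then show "Q \<in> U" by (rule U_sup[OF _ X(2)]) auto
    qed
  qed
  then show ?case using FImp.IH(1)[OF l(1) FImp.prems(2)] FImp.IH(2)[OF l(2) FImp.prems(2)] e
    unfolding P_def Q_def by simp
next
  case (FAll x p)
  have l: "langA p" using FAll.prems(1) unfolding langA_def by simp
  define f where "f = (\<lambda>i. urep (E i))"
  have fPX: "\<forall>i. f i \<in> PX" unfolding f_def using urep_dm(1) FAll.prems(2) by auto
  define B where "B = {n. \<forall>a\<in>dm M. sat M cM ((\<lambda>i. f i n)(x := a)) p}"
  have BX: "B \<in> X" using KEY[of "FAll x p" f cM] FAll.prems(1) fPX unfolding B_def by simp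
  have IH: "sat KK cK (E(x := a)) p \<longleftrightarrow> {n. sat M cM ((\<lambda>i. f i n)(x := urep a n)) p} \<in> U"
    if "a \<in> dm KK" for a
  proof -
    have e: "(\<lambda>i. urep ((E(x := a)) i) n) = (\<lambda>i. f i n)(x := urep a n)" for n
      unfolding f_def by auto
    have d: "\<forall>i. (E(x := a)) i \<in> dm KK" using FAll.prems(2) that by auto
    have "sat KK cK (E(x := a)) p \<longleftrightarrow> {n. sat M cM (\<lambda>i. urep ((E(x := a)) i) n) p} \<in> U"
      by (rule FAll.IH[OF l d])
    then show ?thesis by (simp only: e)
  qed
  have QX: "{n. sat M cM ((\<lambda>i. f i n)(x := g n)) p} \<in> X" if "g \<in> PX" for g
  proof -
    have "(\<lambda>i. (f(x := g)) i n) = (\<lambda>i. f i n)(x := g n)" for n by auto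
    moreover have "\<forall>i. (f(x := g)) i \<in> PX" using fPX that by auto
    ultimately show ?thesis using KEY[OF l, of "f(x := g)" cM] by simp
  qed
  have "(\<forall>a\<in>dm KK. {n. sat M cM ((\<lambda>i. f i n)(x := urep a n)) p} \<in> U) \<longleftrightarrow> B \<in> U"
  proof
    assume B: "B \<in> U"
    show "\<forall>a\<in>dm KK. {n. sat M cM ((\<lambda>i. f i n)(x := urep a n)) p} \<in> U"
    proof
      fix a assume a: "a \<in> dm KK"
      show "{n. sat M cM ((\<lambda>i. f i n)(x := urep a n)) p} \<in> U"
        by (rule U_sup[OF B QX[OF urep_dm(1)[OF a]]]) (use PX_dm urep_dm(1)[OF a] in \<open>auto simp: B_def\<close>)
    qed
  next
    assume all: "\<forall>a\<in>dm KK. {n. sat M cM ((\<lambda>i. f i n)(x := urep a n)) p} \<in> U"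
    show "B \<in> U"
    proof (rule ccontr)
      assume "B \<notin> U"
      then have nB: "- B \<in> U" using U_compl[OF BX] by simp
      obtain g where g: "g \<in> PX"
        "\<forall>n. (\<exists>a\<in>dm M. sat M cM ((\<lambda>i. f i n)(x := a)) (FNeg p)) \<longrightarrow> sat M cM ((\<lambda>i. f i n)(x := g n)) (FNeg p)"
        using WIT[of "FNeg p" f cM x] l fPX unfolding langA_def by auto
      have Q: "{n. sat M cM ((\<lambda>i. f i n)(x := urep (cls g) n)) p} \<in> U" using all cls_dm[OF g(1)] by blast
      have D: "{n. urep (cls g) n = g n} \<in> U" using urep_cls(2)[OF g(1)] .
      have "{n. sat M cM ((\<lambda>i. f i n)(x := urep (cls g) n)) p} \<inter> {n. urep (cls g) n = g n} \<inter> - B \<in> U"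
        using Q D nB U_int by blast
      moreover have "{n. sat M cM ((\<lambda>i. f i n)(x := urep (cls g) n)) p} \<inter> {n. urep (cls g) n = g n} \<inter> - B = {}"
        using g(2) unfolding B_def by auto
      ultimately show False using U_empty by simp
    qed
  qed
  moreover have "{n. sat M cM (\<lambda>i. urep (E i) n) (FAll x p)} = B" unfolding B_def f_def by simp
  ultimately show ?case using IH by (simp add: ultrapower_def)
qed

end



fun Phi :: "fm set \<Rightarrow> nat \<Rightarrow> fm" where
  "Phi p 0 = FEq TZero TZero"
| "Phi p (Suc m) = (if m \<in> code ` p then FConj (inv code m) (Phi p m) else Phi p m)"

lemma inv_code_mem: assumes "m \<in> code ` p" shows "inv code m \<in> p \<and> code (inv code m) = m"
proof -
  obtain q where q: "q \<in> p" "m = code q" using assms by blast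
  have "inv code (code q) = q" using inj_code by (rule inv_f_f)
  then show ?thesis using q by simp
qed

lemma langA_FConj: "langA (FConj a b) \<longleftrightarrow> langA a \<and> langA b"
  unfolding langA_def FConj_def by simp

lemma fv_FConj: "fv (FConj a b) = fv a \<union> fv b"
  unfolding FConj_def by simp

lemma Phi_Suc_in: "m \<in> code ` p \<Longrightarrow> Phi p (Suc m) = FConj (inv code m) (Phi p m)" by simp
lemma Phi_Suc_out: "m \<notin> code ` p \<Longrightarrow> Phi p (Suc m) = Phi p m" by simp

lemma Phi_langA: "p \<subseteq> {q. langA q} \<Longrightarrow> langA (Phi p j)"
proof (induction j)
  case 0 then show ?case by (simp add: langA_def)
next
  case (Suc m) show ?case
  proof (cases "m \<in> code ` p")
    case True
    then have "langA (inv code m)" using inv_code_mem[OF True] Suc.prems by blast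
    then show ?thesis using True Suc by (simp only: Phi_Suc_in[OF True] langA_FConj)
  next
    case False then show ?thesis using Suc by (simp only: Phi_Suc_out[OF False])
  qed
qed

lemma Phi_fv: "fv (Phi p j) \<subseteq> \<Union> (fv ` p)"
proof (induction j)
  case 0 then show ?case by simp
next
  case (Suc m) show ?case
  proof (cases "m \<in> code ` p")
    case True
    then have "inv code m \<in> p" using inv_code_mem[OF True] by blast
    then show ?thesis using True Suc by (simp only: Phi_Suc_in[OF True] fv_FConj) blast
  next
    case False then show ?thesis using Suc by (simp only: Phi_Suc_out[OF False])
  qed
qed

declare Phi.simps(2)[simp del]

lemma Phi_sat: "sat S c e (Phi p j) \<longleftrightarrow> (\<forall>q\<in>p. code q < j \<longrightarrow> sat S c e q)"
proof (induction j)
  case 0 then show ?case by simp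
next
  case (Suc m)
  show ?case
  proof (cases "m \<in> code ` p")
    case True
    then obtain q0 where q0: "q0 \<in> p" "code q0 = m" by auto
    have inv: "inv code m = q0" using inv_code_mem[OF True] q0 code_inj_eq by metis
    have e1: "sat S c e (Phi p (Suc m)) \<longleftrightarrow> sat S c e q0 \<and> sat S c e (Phi p m)"
      by (simp only: Phi_Suc_in[OF True] inv sat_FConj)
    have e2: "(\<forall>q\<in>p. code q < Suc m \<longrightarrow> sat S c e q) \<longleftrightarrow> sat S c e q0 \<and> (\<forall>q\<in>p. code q < m \<longrightarrow> sat S c e q)"
    proof
      assume h: "\<forall>q\<in>p. code q < Suc m \<longrightarrow> sat S c e q"
      show "sat S c e q0 \<and> (\<forall>q\<in>p. code q < m \<longrightarrow> sat S c e q)" using h q0 by auto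
    next
      assume h: "sat S c e q0 \<and> (\<forall>q\<in>p. code q < m \<longrightarrow> sat S c e q)"
      show "\<forall>q\<in>p. code q < Suc m \<longrightarrow> sat S c e q"
      proof (intro ballI impI)
        fix q assume "q \<in> p" "code q < Suc m"
        then have "code q < m \<or> code q = code q0" using q0(2) by linarith
        then show "sat S c e q" using h \<open>q \<in> p\<close> code_inj_eq by blast
      qed
    qed
    show ?thesis using e1 e2 Suc.IH by blast
  next
    case False
    have "(\<forall>q\<in>p. code q < Suc m \<longrightarrow> sat S c e q) \<longleftrightarrow> (\<forall>q\<in>p. code q < m \<longrightarrow> sat S c e q)"
      using False by (auto simp: less_Suc_eq)
    then show ?thesis using Suc.IH by (simp only: Phi_Suc_out[OF False])
  qed
qed

lemma code_Phi_Suc: "code (Phi p (Suc m)) =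
  (if m \<in> code ` p then prod_encode (2, prod_encode (3, prod_encode (m, prod_encode (2, code (Phi p m))))) else code (Phi p m))"
proof (cases "m \<in> code ` p")
  case True
  have "code (inv code m) = m" using inv_code_mem[OF True] by blast
  then show ?thesis using True by (simp only: Phi_Suc_in[OF True] FConj_def code.simps if_True)
next
  case False then show ?thesis by (simp only: Phi_Suc_out[OF False] if_False)
qed

lemma code_FEx: "code (FEx x q) = prod_encode (2, prod_encode (4, prod_encode (x, prod_encode (2, code q))))"
  by (simp add: FEx_def)

lemma rc_Phi:
  assumes "i < length L" "L ! i = code ` p" "rc (JN L) k G"
  shows "rc (JN L) k (\<lambda>xs. code (Phi p (G xs)))"
proof -
  let ?g = "\<lambda>xs::nat list. if xs ! 1 \<in> L ! i then prod_encode (2, prod_encode (3, prod_encode (xs ! 1, prod_encode (2, xs ! 0)))) else xs ! 0"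
  have r: "rc (JN L) (Suc 0) (\<lambda>xs. precf (\<lambda>_. code (FEq TZero TZero)) ?g (hd xs) (tl xs))"
    by (rule rc_prec) (rule rc_const, intro rc_if rp_JN assms(1) rc_pe rc_const rc_proj, simp_all)
  have e: "precf (\<lambda>_. code (FEq TZero TZero)) ?g j [] = code (Phi p j)" for j
    by (induction j) (simp_all add: code_Phi_Suc assms(2) del: Phi.simps, simp)
  have "rc (JN L) 1 (\<lambda>xs. code (Phi p (hd xs)))"
    by (rule rc_cong2[OF r]) (auto simp: e[simplified] length_Suc_conv)
  from rc_comp1[OF this assms(3)] show ?thesis by simp
qed

context upw begin

lemma is_struc_K: "is_struc KK"
proof -
  have on: "on M \<in> dm M" using strM unfolding is_struc_def by simp
  have "zr KK \<in> dm KK" using cls_dm[OF const_PX[OF zr_dm]] by (simp add: ultrapower_def)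
  moreover have "on KK \<in> dm KK" using cls_dm[OF const_PX[OF on]] by (simp add: ultrapower_def)
  moreover have "ad KK a b \<in> dm KK \<and> ml KK a b \<in> dm KK" if "a \<in> dm KK" "b \<in> dm KK" for a b
    using cls_dm[OF adPX[OF urep_dm(1)[OF that(1)] urep_dm(1)[OF that(2)]]]
      cls_dm[OF mlPX[OF urep_dm(1)[OF that(1)] urep_dm(1)[OF that(2)]]]
    by (simp add: ultrapower_def)
  ultimately show ?thesis unfolding is_struc_def by blast
qed

lemma U_fin: "finite S \<Longrightarrow> (\<forall>i\<in>S. {n. P i n} \<in> U) \<Longrightarrow> {n. \<forall>i\<in>S. P i n} \<in> U"
proof (induction S rule: finite_induct)
  case empty then show ?case using U_UNIV by simp
next
  case (insert a F)
  have "{n. P a n} \<inter> {n. \<forall>i\<in>F. P i n} \<in> U" using insert U_int by simp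
  moreover have "{n. P a n} \<inter> {n. \<forall>i\<in>F. P i n} = {n. \<forall>i\<in>insert a F. P i n}" by auto
  ultimately show ?case by simp
qed

lemma elem_emb_K: "elem_emb M KK (\<lambda>c. cls (\<lambda>_. c))"
  unfolding elem_emb_def
proof (intro conjI allI impI)
  show "(\<lambda>c. cls (\<lambda>_. c)) ` dm M \<subseteq> dm KK" using cls_dm const_PX by auto
  fix p :: fm and e :: "nat \<Rightarrow> nat" assume l: "langA p" and e: "\<forall>i. e i \<in> dm M"
  define h where "h = (\<lambda>c. cls (\<lambda>_. c))"
  have hd: "\<forall>i. (h \<circ> e) i \<in> dm KK" using cls_dm const_PX e unfolding h_def by auto
  have L: "sat KK (\<lambda>_. zr KK) (h \<circ> e) p \<longleftrightarrow> {n. sat M (\<lambda>_. zr M) (\<lambda>i. urep ((h \<circ> e) i) n) p} \<in> U"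
    by (rule los[OF l hd])
  define Sp where "Sp = {n. sat M (\<lambda>_. zr M) (\<lambda>i. urep ((h \<circ> e) i) n) p}"
  have SX: "Sp \<in> X" unfolding Sp_def using KEY[OF l] urep_dm(1) hd by auto
  define D where "D = {n. \<forall>i\<in>fv p. urep ((h \<circ> e) i) n = e i}"
  have DU: "D \<in> U" unfolding D_def
    by (rule U_fin[OF finite_fv]) (use urep_cls(2)[OF const_PX] e in \<open>auto simp: h_def\<close>)
  have agree: "n \<in> D \<Longrightarrow> n \<in> Sp \<longleftrightarrow> sat M (\<lambda>_. zr M) e p" for n
  proof -
    assume "n \<in> D"
    then have "\<forall>i\<in>fv p. (\<lambda>i. urep ((h \<circ> e) i) n) i = e i" by (simp add: D_def)
    then have "sat M (\<lambda>_. zr M) (\<lambda>i. urep ((h \<circ> e) i) n) p = sat M (\<lambda>_. zr M) e p"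
      by (rule sat_langA[OF l])
    then show ?thesis by (simp add: Sp_def)
  qed
  show "sat M (\<lambda>_. zr M) e p \<longleftrightarrow> sat KK (\<lambda>_. zr KK) ((\<lambda>c. cls (\<lambda>_. c)) \<circ> e) p"
  proof (cases "sat M (\<lambda>_. zr M) e p")
    case True
    then have "Sp \<in> U" using U_sup[OF DU SX] agree by blast
    then show ?thesis using True L unfolding Sp_def h_def by simp
  next
    case False
    have "Sp \<inter> D = {}" using agree False by blast
    then have "Sp \<notin> U" using U_int DU U_empty by metis
    then show ?thesis using False L unfolding Sp_def h_def by simp
  qed
qed

lemma le_notU: "{n. n \<le> m} \<notin> U"
proof (induction m)
  case 0
  have "{n. n \<le> (0::nat)} = {0}" by auto
  then show ?case using np unfolding nonprincipal_def by simp
next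
  case (Suc m)
  have X1: "{n. n \<le> m} \<in> X"
    using scott_rp[OF sX ediagX, of "\<lambda>n. n \<le> m"] rp_le[OF rc_hd rc_const] by simp
  show ?case
  proof
    assume a: "{n. n \<le> Suc m} \<in> U"
    have "- {n. n \<le> m} \<in> U" using U_compl[OF X1] Suc.IH by simp
    then have "{n. n \<le> Suc m} \<inter> - {n. n \<le> m} \<in> U" using a U_int by blast
    moreover have "{n. n \<le> Suc m} \<inter> - {n. n \<le> m} = {Suc m}" by auto
    ultimately show False using np unfolding nonprincipal_def by simp
  qed
qed

lemma ge_U: "{n. m \<le> n} \<in> U"
proof -
  have X1: "{n. m \<le> n} \<in> X"
    using scott_rp[OF sX ediagX, of "\<lambda>n. m \<le> n"] rp_le[OF rc_const rc_hd] by simp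
  show ?thesis
  proof (cases m)
    case 0 then show ?thesis using U_UNIV by simp
  next
    case (Suc k)
    have "- {n. m \<le> n} = {n. n \<le> k}" using Suc by auto
    then show ?thesis using U_compl[OF X1] le_notU[of k] by auto
  qed
qed

lemma rec_sat_K: "rec_saturated KK"
  unfolding rec_saturated_def
proof (intro allI impI)
  fix p x e
  assume pl: "p \<subseteq> {q. langA q}" and rec: "recursive_set (code ` p)" and fin: "finite (\<Union> (fv ` p))"
    and e: "\<forall>i. e i \<in> dm KK"
    and fs: "\<forall>p0\<subseteq>p. finite p0 \<longrightarrow> (\<exists>a\<in>dm KK. \<forall>q\<in>p0. sat KK (\<lambda>_. zr KK) (e(x := a)) q)"
  define cM where "cM = (\<lambda>_::nat. zr M)"
  define cK where "cK = (\<lambda>_::nat. zr KK)"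
  define f where "f = (\<lambda>i. urep (e i))"
  have fPX: "\<forall>i. f i \<in> PX" unfolding f_def using urep_dm(1) e by auto
  define ys where "ys = sorted_list_of_set (\<Union> (fv ` p) - {x})"
  have ys: "set ys = \<Union> (fv ` p) - {x}" unfolding ys_def using fin by simp
  have xy: "x \<notin> set ys" using ys by simp
  have cpX: "code ` p \<in> X" using scott_recursive[OF sX rec] .
  let ?L = "LL f ys [code ` p]"
  have JX: "JN ?L \<in> X" using LL_X fPX cpX by simp
  have iP: "Suc (length ys + 0) < length ?L" "?L ! Suc (length ys + 0) = code ` p"
    using LL_ex[where j=0 and ex="[code ` p]" and f=f and ys=ys] by auto
  have lP: "langA (Phi p j)" for j using Phi_langA[OF pl] .
  have fvP: "fv (Phi p j) \<subseteq> insert x (set ys)" for j using Phi_fv[of p j] ys by auto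
  define Ex where "Ex = (\<lambda>n j. \<exists>a\<in>dm M. sat M cM ((\<lambda>i. f i n)(x := a)) (Phi p j))"
  define W where "W = (\<lambda>n j a. a \<in> dm M \<and> sat M cM ((\<lambda>i. f i n)(x := a)) (Phi p j))"
  have semE: "code (bindf (map (\<lambda>y. (y, f y n)) ys) (FEx x (Phi p j))) \<in> ediag M \<longleftrightarrow> Ex n j" for n j
  proof -
    have "fv (FEx x (Phi p j)) \<subseteq> set ys" using fvP[of j] fv_FEx by auto
    then show ?thesis using ediag_bind[of "FEx x (Phi p j)" ys "\<lambda>i. f i n" M cM] lP langA_FEx PX_dm fPX
      unfolding Ex_def by (auto simp: sat_FEx)
  qed
  have semW: "code (bindf ((x, a) # map (\<lambda>y. (y, f y n)) ys) (Phi p j)) \<in> ediag M \<longleftrightarrow> W n j a" for n j a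
    using ediag_bind_cons[OF lP[of j] xy fvP[of j], of a "\<lambda>i. f i n" M cM] PX_dm fPX unfolding W_def by auto
  have Ex0: "Ex n 0" for n unfolding Ex_def using zr_dm by auto
  define s where "s = (\<lambda>n. n - (LEAST i. Ex n (n - i)))"
  have s1: "Ex n (s n)" for n
  proof -
    have "Ex n (n - n)" using Ex0 by simp
    then show ?thesis unfolding s_def by (rule LeastI)
  qed
  have s2: "j \<le> n \<Longrightarrow> Ex n j \<Longrightarrow> j \<le> s n" for n j
  proof -
    assume "j \<le> n" "Ex n j"
    then have "Ex n (n - (n - j))" by simp
    then have "(LEAST i. Ex n (n - i)) \<le> n - j" by (rule Least_le)
    then show ?thesis unfolding s_def using \<open>j \<le> n\<close> by simp
  qed
  define g where "g = (\<lambda>n. LEAST a. W n (s n) a)"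
  have gW: "W n (s n) (g n)" for n
  proof -
    obtain a where "W n (s n) a" using s1[of n] unfolding Ex_def W_def by blast
    then show ?thesis unfolding g_def by (rule LeastI)
  qed
  have gdm: "g n \<in> dm M" for n using gW[of n] unfolding W_def by simp
  have rE: "rp (JN ?L) k (\<lambda>xs. Ex (N xs) (Jf xs))" if "rc (JN ?L) k N" "rc (JN ?L) k Jf" for k N Jf
  proof -
    have "rc (JN ?L) k (\<lambda>xs. code (FEx x (Phi p (Jf xs))))"
      unfolding code_FEx by (intro rc_pe rc_const rc_Phi[OF iP] that)
    then have "rp (JN ?L) k (\<lambda>xs. code (bindf (map (\<lambda>y. (y, f y (N xs))) ys) (FEx x (Phi p (Jf xs)))) \<in> ?L ! 0)"
      by (intro rp_bind LL_idx LL_0 that)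
    then show ?thesis by (rule rp_cong) (simp add: LL_0 semE)
  qed
  have "rp (JN ?L) (Suc 1) (\<lambda>xs. Ex (xs ! 1) (xs ! 1 - xs ! 0))"
    by (intro rE rc_sub rc_proj) auto
  then have "rc (JN ?L) 1 (\<lambda>xs. LEAST i. Ex ((i # xs) ! 1) ((i # xs) ! 1 - (i # xs) ! 0))"
    by (rule rc_least) (clarsimp simp: length_Suc_conv, metis Ex0 diff_self_eq_0)
  then have "rc (JN ?L) 1 (\<lambda>xs. hd xs - (LEAST i. Ex ((i # xs) ! 1) ((i # xs) ! 1 - (i # xs) ! 0)))"
    by (intro rc_sub rc_hd)
  then have rs: "rc (JN ?L) 1 (\<lambda>xs. s (hd xs))"
    by (rule rc_cong) (auto simp: s_def length_Suc_conv)
  have rs2: "rc (JN ?L) (Suc 1) (\<lambda>xs. s (xs ! 1))"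
    using rc_comp1[OF rs rc_proj[of 1 "Suc 1"]] by simp
  have "rc (JN ?L) (Suc 1) (\<lambda>xs. code (Phi p (s (xs ! 1))))" by (rule rc_Phi[OF iP rs2])
  then have "rp (JN ?L) (Suc 1) (\<lambda>xs. code (bindf ((x, xs ! 0) # map (\<lambda>y. (y, f y (xs ! 1))) ys) (Phi p (s (xs ! 1)))) \<in> ?L ! 0)"
    by (intro rp_bind_cons LL_idx LL_0 rc_proj) auto
  then have "rp (JN ?L) (Suc 1) (\<lambda>xs. W (xs ! 1) (s (xs ! 1)) (xs ! 0))"
    by (rule rp_cong) (simp add: LL_0 semW)
  then have "rc (JN ?L) 1 (\<lambda>xs. LEAST a. W ((a # xs) ! 1) (s ((a # xs) ! 1)) ((a # xs) ! 0))"
    by (rule rc_least) (use gW in auto)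
  then have "rc (JN ?L) 1 (\<lambda>xs. g (hd xs))"
    by (rule rc_cong) (auto simp: g_def length_Suc_conv)
  then have gPX: "g \<in> PX" by (intro PX_intro[OF gdm JX])
  show "\<exists>a\<in>dm KK. \<forall>q\<in>p. sat KK (\<lambda>_. zr KK) (e(x := a)) q"
  proof (intro bexI[of _ "cls g"] ballI)
    show "cls g \<in> dm KK" by (rule cls_dm[OF gPX])
    fix q assume qp: "q \<in> p"
    define m where "m = code q"
    have lq: "langA q" using qp pl by auto
    define p0 where "p0 = {q' \<in> p. code q' < Suc m}"
    have "finite (code -` {..<Suc m})" by (rule finite_vimageI) (use inj_code in auto)
    then have "finite p0" unfolding p0_def by (rule finite_subset[rotated]) auto
    then obtain a where a: "a \<in> dm KK" "\<forall>q'\<in>p0. sat KK cK (e(x := a)) q'"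
      using fs unfolding p0_def cK_def by auto
    have "sat KK cK e (FEx x (Phi p (Suc m)))"
      using a unfolding sat_FEx Phi_sat p0_def by auto
    then have BU: "{n. Ex n (Suc m)} \<in> U"
      using los[OF langA_FEx[THEN iffD2, OF lP[of "Suc m"]] e, where cK=cK and cM=cM] unfolding Ex_def f_def by (simp add: sat_FEx)
    have CU: "{n. Suc m \<le> n} \<in> U" by (rule ge_U)
    define T1 where "T1 = {n. sat M cM ((\<lambda>i. f i n)(x := g n)) q}"
    have T1X: "T1 \<in> X"
    proof -
      have "(\<lambda>i. (f(x := g)) i n) = (\<lambda>i. f i n)(x := g n)" for n by auto
      moreover have "\<forall>i. (f(x := g)) i \<in> PX" using fPX gPX by auto
      ultimately show ?thesis using KEY[OF lq, of "f(x := g)" cM] unfolding T1_def by simp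
    qed
    have "{n. Ex n (Suc m)} \<inter> {n. Suc m \<le> n} \<subseteq> T1"
    proof
      fix n assume n: "n \<in> {n. Ex n (Suc m)} \<inter> {n. Suc m \<le> n}"
      then have "Suc m \<le> s n" using s2 by auto
      moreover have "sat M cM ((\<lambda>i. f i n)(x := g n)) (Phi p (s n))" using gW[of n] unfolding W_def by simp
      ultimately show "n \<in> T1" unfolding T1_def Phi_sat using qp m_def by auto
    qed
    then have T1U: "T1 \<in> U" using U_sup[OF U_int[OF BU CU] T1X] by blast
    define T2 where "T2 = {n. sat M cM (\<lambda>i. urep ((e(x := cls g)) i) n) q}"
    have e2: "(\<lambda>i. urep ((e(x := cls g)) i) n) = (\<lambda>i. f i n)(x := urep (cls g) n)" for n
      unfolding f_def by auto
    have T2X: "T2 \<in> X"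
    proof -
      have "(\<lambda>i. (f(x := urep (cls g))) i n) = (\<lambda>i. f i n)(x := urep (cls g) n)" for n by auto
      moreover have "\<forall>i. (f(x := urep (cls g))) i \<in> PX" using fPX urep_cls(1)[OF gPX] by auto
      ultimately show ?thesis using KEY[OF lq, of "f(x := urep (cls g))" cM] unfolding T2_def e2 by simp
    qed
    have "T2 \<in> U \<longleftrightarrow> T1 \<in> U"
    proof (rule U_agree[OF T2X T1X urep_cls(2)[OF gPX]])
      fix n assume "n \<in> {n. urep (cls g) n = g n}"
      then have "(\<lambda>i. urep ((e(x := cls g)) i) n) = (\<lambda>i. f i n)(x := g n)" using e2[of n] by simp
      then show "n \<in> T2 \<longleftrightarrow> n \<in> T1" unfolding T1_def T2_def mem_Collect_eq by (simp only:)
    qed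
    then have T2U: "T2 \<in> U" using T1U by simp
    have ed: "\<forall>i. (e(x := cls g)) i \<in> dm KK" using e cls_dm[OF gPX] by auto
    show "sat KK (\<lambda>_. zr KK) (e(x := cls g)) q"
      using iffD2[OF los[OF lq ed, where cK="\<lambda>_. zr KK" and cM=cM] T2U[unfolded T2_def]] .
  qed
qed

end

theorem mainTheorem20:
  fixes X :: "nat set set" and T :: "nat set" and M :: "nat struc" and U :: "nat set set"
  assumes "scott_set X"
    and "T \<in> X" and "compl_cons_ext_PA T"
    and "is_struc M" and "models M T" and "coded_in M X"
    and "ultrafilter_on X U" and "nonprincipal U"
  shows "is_struc (ultrapower X M U)
    \<and> elem_emb M (ultrapower X M U) (\<lambda>c. ucls X M U (\<lambda>_. c))
    \<and> rec_saturated (ultrapower X M U)"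
proof -
  interpret upw X M U using assms by unfold_locales auto
  show ?thesis using is_struc_K elem_emb_K rec_sat_K by blast
qed


end
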